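(* Let $p$ be a prime and $q = 2^p$. Then $|\mathrm{Solv}(\mathrm{PSL}(2, q))| = 2q^2$.
   Context: For a finite group $G$ and $x \in G$, the solvabilizer of $x$ in $G$ is $\mathrm{Sol}_G(x) = \{y \in G : \langle x, y \rangle \text{ is solvable}\}$. $\mathrm{Solv}(G) = \{\mathrm{Sol}_G(x) : x \in G\}$ is the set of distinct solvabilizers of elements of $G$, and $|\mathrm{Solv}(G)|$ is its cardinality. *)

theory Defs
  imports "HOL-Computational_Algebra.Primes" "HOL-Analysis.Determinants" "HOL-Algebra.Solvable_Groups"
begin

definition SL2 :: "'a::field itself \<Rightarrow> ('a^2^2) monoid" where
  "SL2 _ = \<lparr>carrier = {A :: 'a^2^2. det A = 1}, mult = (\<lambda>A B. A ** B), one = mat 1\<rparr>"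

definition SL2_scalars :: "'a::field itself \<Rightarrow> ('a^2^2) set" where
  "SL2_scalars T = {A. A \<in> carrier (SL2 T) \<and> (\<exists>c::'a. A = mat c)}"

definition PSL2 :: "'a::field itself \<Rightarrow> ('a^2^2) set monoid" where
  "PSL2 T = SL2 T Mod SL2_scalars T"

definition Sol :: "('g, 'b) monoid_scheme \<Rightarrow> 'g \<Rightarrow> 'g set" where
  "Sol G x = {y \<in> carrier G. solvable (subgroup_generated G {x, y})}"

definition Solv :: "('g, 'b) monoid_scheme \<Rightarrow> 'g set set" where
  "Solv G = Sol G ` carrier G"

end

theory Submission
  imports Defs "HOL-Number_Theory.Residues"
begin


definition M :: "'a::field \<Rightarrow> 'a \<Rightarrow> 'a \<Rightarrow> 'a \<Rightarrow> 'a^2^2" where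
  "M a b c d = (\<chi> i j. if i = 1 then (if j = 1 then a else b) else (if j = 1 then c else d))"

definition V :: "'a::field \<Rightarrow> 'a \<Rightarrow> 'a^2" where
  "V x y = (\<chi> i. if i = 1 then x else y)"

lemma two_ne_one2: "(2::2) \<noteq> 1" by simp

lemma M_nth [simp]: "M a b c d $ 1 $ 1 = a" "M a b c d $ 1 $ 2 = b" "M a b c d $ 2 $ 1 = c" "M a b c d $ 2 $ 2 = d"
  by (simp_all add: M_def)

lemma V_nth [simp]: "V x y $ 1 = x" "V x y $ 2 = y"
  by (simp_all add: V_def)

lemma M_eta: "A = M (A$1$1) (A$1$2) (A$2$1) (A$2$2)"
  by (simp add: vec_eq_iff forall_2)

lemma V_eta: "v = V (v$1) (v$2)"
  by (simp add: vec_eq_iff forall_2)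

lemma M_eq_iff [simp]: "M a b c d = M a' b' c' d' \<longleftrightarrow> a = a' \<and> b = b' \<and> c = c' \<and> d = d'"
  by (simp add: vec_eq_iff forall_2 M_def)

lemma V_eq_iff [simp]: "V a b = V a' b' \<longleftrightarrow> a = a' \<and> b = b'"
  by (simp add: vec_eq_iff forall_2 V_def)

lemma M_mult [simp]: "M a b c d ** M e f g h = M (a*e+b*g) (a*f+b*h) (c*e+d*g) (c*f+d*h)"
  by (simp add: vec_eq_iff forall_2 matrix_matrix_mult_def sum_2)

lemma M_zero_iff [simp]: "M a b c d = 0 \<longleftrightarrow> a = 0 \<and> b = 0 \<and> c = 0 \<and> d = 0"
  by (simp add: vec_eq_iff forall_2 M_def)

lemma M_add [simp]: "M a b c d + M e f g h = M (a+e) (b+f) (c+g) (d+h)"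
  by (simp add: vec_eq_iff forall_2)

lemma mat_M: "mat x = M x 0 0 x"
  by (simp add: vec_eq_iff forall_2 mat_def)

lemma det_M [simp]: "det (M a b c d) = a*d - b*c"
  by (simp add: det_2)

lemma M_mulv [simp]: "M a b c d *v V x y = V (a*x+b*y) (c*x+d*y)"
  by (simp add: vec_eq_iff forall_2 matrix_vector_mult_def sum_2)

lemma V_zero_iff [simp]: "V x y = 0 \<longleftrightarrow> x = 0 \<and> y = 0"
  by (simp add: vec_eq_iff forall_2)

lemma V_scale [simp]: "c *s V x y = V (c*x) (c*y)"
  by (simp add: vec_eq_iff forall_2)

lemma V_add [simp]: "V x y + V x' y' = V (x+x') (y+y')"
  by (simp add: vec_eq_iff forall_2)

locale C2 =
  fixes TT :: "'a::{field,finite} itself"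
  assumes two: "(2::'a) = 0"
  and gam: "\<exists>g::'a. g \<noteq> 0 \<and> g \<noteq> 1"
begin

lemma add_self [simp]: "x + x = (0::'a)"
  by (metis mult_2 mult_zero_left two)
lemma add_self2 [simp]: "x + (x + y) = (y::'a)"
  by (metis add.assoc add_self add_0)
lemma bit0 [simp]: "numeral (Num.Bit0 n) = (0::'a)"
  by (metis add_self numeral_Bit0)
lemma bit1 [simp]: "numeral (Num.Bit1 n) = (1::'a)"
  by (metis add_self numeral_Bit1 add_0 add.commute)
lemma neg_id [simp]: "- x = (x::'a)"
  using add_self[of x] by (metis add_eq_0_iff2)
lemma minus_plus [simp]: "x - y = x + (y::'a)"
  by simp

lemma sq_sum: "(x + y) * (x + y) = x * x + y * (y::'a)"
  by (simp add: algebra_simps)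

lemma sq_inj: "x * x = y * y \<Longrightarrow> x = (y::'a)"
proof -
  assume "x * x = y * y"
  hence "(x + y) * (x + y) = 0" by (simp add: sq_sum)
  hence "x + y = 0" by simp
  thus ?thesis by (metis add_self add_right_cancel)
qed

lemma sq_eq_iff [simp]: "x * x = y * y \<longleftrightarrow> x = (y::'a)"
  using sq_inj by blast

lemma sqrt_ex: "\<exists>r. r * r = (a::'a)"
proof -
  have "inj (\<lambda>x::'a. x * x)" by (auto simp: inj_def)
  hence "surj (\<lambda>x::'a. x * x)" by (rule finite_UNIV_inj_surj[OF finite_class.finite_UNIV])
  from surjD[OF this, of a] obtain r where "a = r * r" by blast
  thus ?thesis by blast
qed

lemma sq_one_iff [simp]: "x * x = 1 \<longleftrightarrow> x = (1::'a)"
  using sq_eq_iff[of x 1] by simp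


definition tr :: "'a^2^2 \<Rightarrow> 'a" where "tr A = A$1$1 + A$2$2"
definition adj :: "'a^2^2 \<Rightarrow> 'a^2^2" where "adj A = M (A$2$2) (A$1$2) (A$2$1) (A$1$1)"
definition det2 :: "'a^2 \<Rightarrow> 'a^2 \<Rightarrow> 'a" where "det2 u w = u$1 * w$2 + u$2 * w$1"
definition nu :: "'a^2 \<Rightarrow> 'a^2^2" where "nu u = M (u$1*u$2) (u$1*u$1) (u$2*u$2) (u$1*u$2)"
definition T :: "'a^2 \<Rightarrow> 'a^2^2" where "T u = mat 1 + nu u"
definition scal :: "'a^2^2 \<Rightarrow> bool" where "scal A \<longleftrightarrow> (\<exists>c. A = mat c)"
definition eig :: "'a^2^2 \<Rightarrow> 'a^2 \<Rightarrow> bool" where "eig g v \<longleftrightarrow> (\<exists>l. g *v v = l *s v)"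
definition NL :: "'a^2^2 \<Rightarrow> 'a^2^2 \<Rightarrow> bool" where
  "NL m g \<longleftrightarrow> (\<exists>al be. g ** m = (mat al ** m + mat be) ** g)"
definition Gs :: "('a^2^2) set" where "Gs = {A. det A = 1}"

lemma tr_M [simp]: "tr (M a b c d) = a + d" by (simp add: tr_def)
lemma adj_M [simp]: "adj (M a b c d) = M d b c a" by (simp add: adj_def)
lemma det2_V [simp]: "det2 (V a b) (V c d) = a * d + b * c" by (simp add: det2_def)
lemma nu_V [simp]: "nu (V a b) = M (a*b) (a*a) (b*b) (a*b)" by (simp add: nu_def)
lemma T_V [simp]: "T (V a b) = M (1 + a*b) (a*a) (b*b) (1 + a*b)" by (simp add: T_def mat_M)
lemma det_M' : "det (M (a::'a) b c d) = a*d + b*c" by simp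
lemma scal_M [simp]: "scal (M a b c d) \<longleftrightarrow> b = 0 \<and> c = 0 \<and> a = d"
  by (auto simp: scal_def mat_M)

lemmas Msimps = mat_M det_M'

lemma M_exhaust: obtains a b c d where "A = M a b c d"
  using M_eta by blast
lemma V_exhaust: obtains a b where "v = V a b"
  using V_eta by blast

lemma scal_det1: "scal A \<Longrightarrow> det A = 1 \<Longrightarrow> A = mat 1"
  by (auto simp: scal_def mat_M)

lemma adj_right: "A ** adj A = mat (det A)"
  by (cases A rule: M_exhaust) (simp add: Msimps algebra_simps)
lemma adj_left: "adj A ** A = mat (det A)"
  by (cases A rule: M_exhaust) (simp add: Msimps algebra_simps)

lemma CH: "A ** A = mat (tr A) ** A + mat (det A)"
  by (cases A rule: M_exhaust) (simp add: Msimps algebra_simps)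

lemma det_plus: "det (A + mat s) = det A + s * tr A + s * s"
  by (cases A rule: M_exhaust) (simp add: Msimps algebra_simps)

lemma tr_add: "tr (A + B) = tr A + tr B"
  by (simp add: tr_def)

lemma tr_scale: "tr (mat a ** A) = a * tr A"
  by (cases A rule: M_exhaust) (simp add: Msimps algebra_simps)

lemma tr_mat [simp]: "tr (mat a) = 0"
  by (simp add: mat_M)

lemma tr_conj: "tr (g ** m ** adj g) = det g * tr m"
  by (cases g rule: M_exhaust, cases m rule: M_exhaust) (simp add: Msimps algebra_simps)

lemma kernel_ex: "det (B::'a^2^2) = 0 \<Longrightarrow> \<exists>v. v \<noteq> 0 \<and> B *v v = 0"
proof -
  assume d: "det B = 0"
  obtain a b c e where B: "B = M a b c e" by (rule that[OF M_eta])
  hence de: "a * e = b * c" using d by (simp add: add_eq_0_iff2)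
  show ?thesis
  proof (cases "a = 0 \<and> b = 0")
    case True
    show ?thesis
    proof (cases "c = 0 \<and> e = 0")
      case True
      thus ?thesis using \<open>a = 0 \<and> b = 0\<close> B by (intro exI[of _ "V 1 0"]) simp
    next
      case False
      thus ?thesis using \<open>a = 0 \<and> b = 0\<close> B by (intro exI[of _ "V e c"]) (auto simp: algebra_simps)
    qed
  next
    case False
    thus ?thesis using B de by (intro exI[of _ "V b a"]) (auto simp: algebra_simps)
  qed
qed

lemma basis_zero: "(B::'a^2^2) *v v = 0 \<Longrightarrow> B *v w = 0 \<Longrightarrow> det2 v w \<noteq> 0 \<Longrightarrow> B = 0"
proof -
  assume h: "B *v v = 0" "B *v w = 0" "det2 v w \<noteq> 0"
  obtain a b c e where B: "B = M a b c e" by (rule that[OF M_eta])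
  obtain v1 v2 where v: "v = V v1 v2" by (rule that[OF V_eta])
  obtain w1 w2 where w: "w = V w1 w2" by (rule that[OF V_eta])
  have e1: "a * v1 + b * v2 = 0" "c * v1 + e * v2 = 0" "a * w1 + b * w2 = 0" "c * w1 + e * w2 = 0"
    using h B v w by auto
  let ?D = "v1 * w2 + v2 * w1"
  have D: "?D \<noteq> 0" using h v w by simp
  have "a * ?D = w2 * (a * v1 + b * v2) + v2 * (a * w1 + b * w2)" by (simp add: algebra_simps)
  hence "a = 0" using e1 D by simp
  moreover have "b * ?D = w1 * (a * v1 + b * v2) + v1 * (a * w1 + b * w2)" by (simp add: algebra_simps)
  hence "b = 0" using e1 D by simp
  moreover have "c * ?D = w2 * (c * v1 + e * v2) + v2 * (c * w1 + e * w2)" by (simp add: algebra_simps)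
  hence "c = 0" using e1 D by simp
  moreover have "e * ?D = w1 * (c * v1 + e * v2) + v1 * (c * w1 + e * w2)" by (simp add: algebra_simps)
  hence "e = 0" using e1 D by simp
  ultimately show "B = 0" using B by (simp add: vec_eq_iff forall_2)
qed

lemma par: "det2 v w = 0 \<Longrightarrow> v \<noteq> 0 \<Longrightarrow> \<exists>k. w = k *s (v::'a^2)"
proof -
  assume h: "det2 v w = 0" "v \<noteq> 0"
  obtain v1 v2 where v: "v = V v1 v2" by (rule that[OF V_eta])
  obtain w1 w2 where w: "w = V w1 w2" by (rule that[OF V_eta])
  have d: "v1 * w2 = v2 * w1" using h v w by (simp add: add_eq_0_iff2)
  show ?thesis
  proof (cases "v1 = 0")
    case False
    show ?thesis using False d v w
      by (intro exI[of _ "w1 / v1"]) (auto simp: field_simps)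
  next
    case True
    hence "v2 \<noteq> 0" using h v by auto
    thus ?thesis using True d v w
      by (intro exI[of _ "w2 / v2"]) (auto simp: field_simps)
  qed
qed

lemma nu_mulv: "nu u *v w = det2 u w *s u"
  by (cases u rule: V_exhaust, cases w rule: V_exhaust) (simp add: Msimps algebra_simps)

lemma nu_sq: "nu u ** nu u = 0"
  by (cases u rule: V_exhaust) (simp add: Msimps algebra_simps)

lemma T_sq: "T u ** T u = mat 1"
  by (cases u rule: V_exhaust) (simp add: Msimps algebra_simps)

lemma det_T: "det (T u) = 1"
  by (cases u rule: V_exhaust) (simp add: Msimps algebra_simps)

lemma tr_T: "tr (T u) = 0"
  by (cases u rule: V_exhaust) (simp add: Msimps algebra_simps)

lemma T_scale_mult: "T (k *s u) ** T (l *s u) = T ((k + l) *s u)"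
  by (cases u rule: V_exhaust) (simp add: Msimps algebra_simps)

lemma tr_TT: "tr (T u ** T v) = det2 u v * det2 u v"
  by (cases u rule: V_exhaust, cases v rule: V_exhaust) (simp add: Msimps algebra_simps)

lemma T_fix: "T u *v u = u"
  by (cases u rule: V_exhaust) (simp add: Msimps algebra_simps)


lemma lin_M: "mat al ** M a b c d + mat be = M (al*a+be) (al*b) (al*c) (al*d+be)"
  by (simp add: mat_M)

lemma comm_lemma:
  assumes c: "x ** b = b ** (x::'a^2^2)" and ns: "\<not> scal x"
  shows "\<exists>al be. b = mat al ** x + mat be"
proof -
  obtain a1 a2 a3 a4 where x: "x = M a1 a2 a3 a4" by (rule M_exhaust)
  obtain b1 b2 b3 b4 where b: "b = M b1 b2 b3 b4" by (rule M_exhaust)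
  have E: "a1*b1 + a2*b3 = b1*a1 + b2*a3" "a1*b2 + a2*b4 = b1*a2 + b2*a4"
     "a3*b1 + a4*b3 = b3*a1 + b4*a3" using c x b by simp_all
  have e1: "a2 * b3 = a3 * b2" using E(1) by (simp add: mult.commute)
  have e2: "b2 * (a1 + a4) = a2 * (b1 + b4)"
  proof -
    have "b2 * (a1 + a4) + a2 * (b1 + b4) = (a1*b2 + a2*b4) + (b1*a2 + b2*a4)"
      by (simp add: algebra_simps)
    also have "\<dots> = 0" using E(2) by simp
    finally show ?thesis by (simp add: add_eq_0_iff2)
  qed
  have e3: "b3 * (a1 + a4) = a3 * (b1 + b4)"
  proof -
    have "b3 * (a1 + a4) + a3 * (b1 + b4) = (a3*b1 + a4*b3) + (b3*a1 + b4*a3)"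
      by (simp add: algebra_simps)
    also have "\<dots> = 0" using E(3) by simp
    finally show ?thesis by (simp add: add_eq_0_iff2)
  qed
  have nsc: "a2 \<noteq> 0 \<or> a3 \<noteq> 0 \<or> a1 \<noteq> a4" using ns x by auto
  show ?thesis
  proof (cases "a2 \<noteq> 0")
    case True
    define al where "al = b2 / a2"
    have h1: "b2 = al * a2" using True by (simp add: al_def)
    have h2: "b3 = al * a3" using True e1 unfolding al_def
      by (metis mult.commute nonzero_mult_div_cancel_left times_divide_eq_left)
    have h3: "b4 = al * a4 + (b1 + al * a1)"
    proof -
      have "al * (a1 + a4) = b1 + b4" using True e2 unfolding al_def
        by (metis mult.commute nonzero_mult_div_cancel_left times_divide_eq_left)
      thus ?thesis by (simp add: algebra_simps)
    qed
    show ?thesis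
      apply (rule exI[of _ al], rule exI[of _ "b1 + al * a1"])
      apply (simp only: x b lin_M M_eq_iff)
      using h1 h2 h3 by (simp add: mult.commute)
  next
    case False
    show ?thesis
    proof (cases "a3 \<noteq> 0")
      case True
      define al where "al = b3 / a3"
      have h1: "b3 = al * a3" using True by (simp add: al_def)
      have h2: "b2 = al * a2" using True e1 unfolding al_def
        by (metis mult.commute nonzero_mult_div_cancel_left times_divide_eq_left)
      have h3: "b4 = al * a4 + (b1 + al * a1)"
      proof -
        have "al * (a1 + a4) = b1 + b4" using True e3 unfolding al_def
          by (metis mult.commute nonzero_mult_div_cancel_left times_divide_eq_left)
        thus ?thesis by (simp add: algebra_simps)
      qed
      show ?thesis
        apply (rule exI[of _ al], rule exI[of _ "b1 + al * a1"])
        apply (simp only: x b lin_M M_eq_iff)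
        using h1 h2 h3 by (simp add: mult.commute)
    next
      case False2: False
      have a14: "a1 + a4 \<noteq> 0"
      proof
        assume "a1 + a4 = 0"
        hence "a1 = a4" by (simp add: add_eq_0_iff2)
        thus False using nsc False False2 by simp
      qed
      define al where "al = (b1 + b4) / (a1 + a4)"
      have h1: "b2 = 0" using e2 False a14 by simp
      have h2: "b3 = 0" using e3 False2 a14 by simp
      have h3: "b4 = al * a4 + (b1 + al * a1)"
      proof -
        have "al * (a1 + a4) = b1 + b4" using a14 by (simp add: al_def)
        thus ?thesis by (simp add: algebra_simps)
      qed
      show ?thesis
        apply (rule exI[of _ al], rule exI[of _ "b1 + al * a1"])
        apply (simp only: x b lin_M M_eq_iff)
        using h1 h2 h3 False False2 by simp
    qed
  qed
qed


lemma lin_comm: "(mat al ** x + mat be) ** (mat al' ** x + mat be') = (mat al' ** x + mat be') ** (mat al ** (x::'a^2^2) + mat be)"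
  by (cases x rule: M_exhaust) (simp add: Msimps algebra_simps)

abbreviation SL where "SL \<equiv> SL2 TYPE('a)"

lemma carrier_SL [simp]: "carrier SL = Gs" by (simp add: SL2_def Gs_def)
lemma mult_SL [simp]: "x \<otimes>\<^bsub>SL\<^esub> y = x ** y" by (simp add: SL2_def)
lemma one_SL [simp]: "\<one>\<^bsub>SL\<^esub> = mat 1" by (simp add: SL2_def)

lemma Gs_mult: "x \<in> Gs \<Longrightarrow> y \<in> Gs \<Longrightarrow> x ** y \<in> Gs"
  by (simp add: Gs_def det_mul)
lemma Gs_one: "mat 1 \<in> Gs" by (simp add: Gs_def)
lemma Gs_adj: "x \<in> Gs \<Longrightarrow> adj x \<in> Gs"
  by (cases x rule: M_exhaust) (simp add: Gs_def algebra_simps)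
lemma adj_left1: "x \<in> Gs \<Longrightarrow> adj x ** x = mat 1"
  by (simp add: adj_left Gs_def)
lemma adj_right1: "x \<in> Gs \<Longrightarrow> x ** adj x = mat 1"
  by (simp add: adj_right Gs_def)

lemma group_SL: "group SL"
  apply (rule groupI)
  apply (simp_all add: Gs_mult Gs_one matrix_mul_assoc)
  using Gs_adj adj_left1 by blast

lemma inv_SL: "x \<in> Gs \<Longrightarrow> inv\<^bsub>SL\<^esub> x = adj x"
  using group.inv_equality[OF group_SL, of "adj x" x] Gs_adj adj_left1 by simp

end


lemma (in group) derived_pow_sub:
  assumes "subgroup H G" shows "(derived G ^^ n) H \<subseteq> H"
proof (induction n)
  case 0 thus ?case by simp
next
  case (Suc n) thus ?case using derived_incl[OF _ assms] by simp
qed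

lemma (in group) derived_pow_consistent:
  assumes "subgroup H G"
  shows "(derived (G\<lparr>carrier := H\<rparr>) ^^ n) H = (derived G ^^ n) H"
proof (induction n)
  case 0 thus ?case by simp
next
  case (Suc n)
  have "(derived G ^^ n) H \<subseteq> H" by (rule derived_pow_sub[OF assms])
  thus ?case using Suc derived_consistent[OF _ assms] by simp
qed

lemma (in group) solv_gen_iff:
  assumes S: "S \<subseteq> carrier G"
  shows "solvable (subgroup_generated G S) \<longleftrightarrow> (\<exists>n. (derived G ^^ n) (generate G S) = {\<one>})"
proof -
  let ?H = "generate G S"
  have sg: "subgroup ?H G" by (rule generate_is_subgroup[OF S])
  have eq: "subgroup_generated G S = G\<lparr>carrier := ?H\<rparr>"
    using S by (simp add: subgroup_generated_def Int_absorb1)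
  have gK: "group (G\<lparr>carrier := ?H\<rparr>)" by (rule subgroup_imp_group[OF sg])
  have "solvable (G\<lparr>carrier := ?H\<rparr>) \<longleftrightarrow> (\<exists>n. (derived (G\<lparr>carrier := ?H\<rparr>) ^^ n) ?H = {\<one>})"
    using group.solvable_iff_trivial_derived_seq[OF gK] by simp
  thus ?thesis using eq derived_pow_consistent[OF sg] by simp
qed


lemma step_ex: "P (0::nat) \<Longrightarrow> \<not> P n \<Longrightarrow> \<exists>k. P k \<and> \<not> P (Suc k)"
  by (induction n) auto

lemma (in group) derived_pow_normal:
  assumes "subgroup H G"
  shows "(derived G ^^ k) H \<lhd> G\<lparr>carrier := H\<rparr>"
proof -
  interpret K: group "G\<lparr>carrier := H\<rparr>" by (rule subgroup_imp_group[OF assms])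
  have "(derived (G\<lparr>carrier := H\<rparr>) ^^ k) H \<lhd> G\<lparr>carrier := H\<rparr>"
  proof (induction k)
    case 0 thus ?case using K.normal_self by simp
  next
    case (Suc k) thus ?case using K.derived_is_normal by simp
  qed
  thus ?thesis using derived_pow_consistent[OF assms] by simp
qed

lemma (in group) comm_decomp:
  assumes x: "x \<in> carrier G" and y: "y \<in> carrier G"
  shows "(x \<otimes> y \<otimes> inv x \<otimes> inv y) \<otimes> (y \<otimes> x) = x \<otimes> y"
proof -
  have a1: "inv y \<otimes> (y \<otimes> x) = x" using x y by (simp add: m_assoc[symmetric])
  have a2: "inv x \<otimes> x = \<one>" using x by simp
  have "(x \<otimes> y \<otimes> inv x \<otimes> inv y) \<otimes> (y \<otimes> x) = x \<otimes> (y \<otimes> (inv x \<otimes> (inv y \<otimes> (y \<otimes> x))))"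
    using x y by (simp only: m_assoc inv_closed m_closed)
  also have "\<dots> = x \<otimes> y" using a1 a2 x y by simp
  finally show ?thesis .
qed

lemma (in group) solvable_gen_elem:
  assumes S: "S \<subseteq> carrier G" and sol: "solvable (subgroup_generated G S)"
  shows "generate G S = {\<one>} \<or>
    (\<exists>a \<in> generate G S. a \<noteq> \<one> \<and> (\<forall>h \<in> generate G S. (h \<otimes> a \<otimes> inv h) \<otimes> a = a \<otimes> (h \<otimes> a \<otimes> inv h)))"
proof (cases "generate G S = {\<one>}")
  case True thus ?thesis by simp
next
  case False
  let ?H = "generate G S"
  let ?D = "\<lambda>k. (derived G ^^ k) ?H"
  have sg: "subgroup ?H G" by (rule generate_is_subgroup[OF S])
  obtain n where n: "?D n = {\<one>}" using sol solv_gen_iff[OF S] by blast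
  obtain k where k: "?D k \<noteq> {\<one>}" "?D (Suc k) = {\<one>}"
    using step_ex[of "\<lambda>k. ?D k \<noteq> {\<one>}" n] False n by auto
  have sgk: "subgroup (?D k) G" by (rule exp_of_derived_is_subgroup[OF sg])
  have subk: "?D k \<subseteq> ?H" by (rule derived_pow_sub[OF sg])
  obtain a where a: "a \<in> ?D k" "a \<noteq> \<one>"
    using k(1) subgroup.one_closed[OF sgk] by blast
  have nk: "?D k \<lhd> G\<lparr>carrier := ?H\<rparr>" by (rule derived_pow_normal[OF sg])
  show ?thesis
  proof (rule disjI2, rule bexI[of _ a], intro conjI ballI)
    show "a \<noteq> \<one>" by (rule a(2))
    show "a \<in> ?H" using a(1) subk by blast
    fix h assume h: "h \<in> ?H"
    have hc: "h \<in> carrier G" using h sg subgroup.subset by blast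
    have ac: "a \<in> carrier G" using a(1) subk sg subgroup.subset by blast
    have "h \<otimes>\<^bsub>G\<lparr>carrier := ?H\<rparr>\<^esub> a \<otimes>\<^bsub>G\<lparr>carrier := ?H\<rparr>\<^esub> inv\<^bsub>G\<lparr>carrier := ?H\<rparr>\<^esub> h \<in> ?D k"
      using normal.inv_op_closed2[OF nk, of h a] h a(1) by simp
    hence b: "h \<otimes> a \<otimes> inv h \<in> ?D k" using m_inv_consistent[OF sg h] by simp
    let ?b = "h \<otimes> a \<otimes> inv h"
    have bc: "?b \<in> carrier G" using hc ac by simp
    have "?b \<otimes> a \<otimes> inv ?b \<otimes> inv a \<in> derived_set G (?D k)" using b a(1) by blast
    hence "?b \<otimes> a \<otimes> inv ?b \<otimes> inv a \<in> ?D (Suc k)"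
      unfolding derived_def by (simp add: generate.incl)
    hence c1: "?b \<otimes> a \<otimes> inv ?b \<otimes> inv a = \<one>" using k(2) by simp
    have "?b \<otimes> a = (?b \<otimes> a \<otimes> inv ?b \<otimes> inv a) \<otimes> (a \<otimes> ?b)"
      using comm_decomp[OF bc ac] by simp
    thus "?b \<otimes> a = a \<otimes> ?b" using c1 bc ac by simp
  qed
qed

lemma (in group) solvable_of_metabelian:
  assumes S: "S \<subseteq> carrier G" and K: "subgroup K G" and C: "subgroup C G"
    and SK: "S \<subseteq> K" and dK: "\<And>g h. g \<in> K \<Longrightarrow> h \<in> K \<Longrightarrow> g \<otimes> h \<otimes> inv g \<otimes> inv h \<in> C"
    and Cc: "\<And>g h. g \<in> C \<Longrightarrow> h \<in> C \<Longrightarrow> g \<otimes> h = h \<otimes> g"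
  shows "solvable (subgroup_generated G S)"
proof -
  have HK: "generate G S \<subseteq> K" by (rule generate_subgroup_incl[OF SK K])
  have "derived_set G K \<subseteq> C" using dK by blast
  hence d1: "derived G K \<subseteq> C" unfolding derived_def by (rule generate_subgroup_incl[OF _ C])
  have Csub: "C \<subseteq> carrier G" using C subgroup.subset by blast
  have "derived_set G C \<subseteq> {\<one>}"
  proof
    fix x assume "x \<in> derived_set G C"
    then obtain g h where gh: "g \<in> C" "h \<in> C" "x = g \<otimes> h \<otimes> inv g \<otimes> inv h" by blast
    have gc: "g \<in> carrier G" "h \<in> carrier G" using gh Csub by auto
    have "x = h \<otimes> g \<otimes> inv g \<otimes> inv h" using gh Cc by simp
    also have "\<dots> = \<one>" using gc by (simp add: m_assoc)
    finally show "x \<in> {\<one>}" by simp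
  qed
  hence d2: "derived G C \<subseteq> {\<one>}" unfolding derived_def
    using generate_subgroup_incl[OF _ triv_subgroup] by blast
  have "(derived G ^^ 2) (generate G S) \<subseteq> derived G (derived G K)"
    using mono_derived[OF mono_derived[OF HK]] by (simp add: numeral_2_eq_2)
  also have "\<dots> \<subseteq> derived G C" by (rule mono_derived[OF d1])
  also have "\<dots> \<subseteq> {\<one>}" by (rule d2)
  finally have "(derived G ^^ 2) (generate G S) \<subseteq> {\<one>}" .
  moreover have "\<one> \<in> (derived G ^^ 2) (generate G S)"
    using subgroup.one_closed[OF exp_of_derived_is_subgroup[OF generate_is_subgroup[OF S]]] by blast
  ultimately have "(derived G ^^ 2) (generate G S) = {\<one>}" by blast
  thus ?thesis using solv_gen_iff[OF S] by blast
qed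


context C2 begin

lemma mat_comm: "(A::'a^2^2) ** mat c = mat c ** A"
  by (cases A rule: M_exhaust) (simp add: Msimps algebra_simps)
lemma rdistrib: "((A::'a^2^2) + (B::'a^2^2)) ** (C::'a^2^2) = A ** C + B ** C"
  by (cases A rule: M_exhaust, cases B rule: M_exhaust, cases C rule: M_exhaust) (simp add: algebra_simps)
lemma ldistrib: "(A::'a^2^2) ** ((B::'a^2^2) + (C::'a^2^2)) = A ** B + A ** C"
  by (cases A rule: M_exhaust, cases B rule: M_exhaust, cases C rule: M_exhaust) (simp add: algebra_simps)
lemma mat_add: "mat a + mat b = (mat (a + b) :: 'a^2^2)"
  by (simp add: Msimps)
lemma mat_mult: "mat a ** mat b = (mat (a * b) :: 'a^2^2)"
  by (simp add: Msimps)
lemma madd_self: "(A::'a^2^2) + A = 0"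
  by (cases A rule: M_exhaust) simp
lemma madd_cancel: "(A::'a^2^2) + (B::'a^2^2) = (C::'a^2^2) \<Longrightarrow> A = C + B"
  by (cases A rule: M_exhaust, cases B rule: M_exhaust, cases C rule: M_exhaust) (auto simp: add.assoc)
lemma mulv_smult: "(A::'a^2^2) *v (c *s v) = c *s (A *v v)"
  by (cases A rule: M_exhaust, cases v rule: V_exhaust) (simp add: algebra_simps)
lemma mulv_add: "(A::'a^2^2) *v (v + w) = A *v v + A *v w"
  by (cases A rule: M_exhaust, cases v rule: V_exhaust, cases w rule: V_exhaust) (simp add: algebra_simps)
lemma det2_mulv: "det2 (A *v v) (A *v w) = det A * det2 v (w::'a^2)"
  by (cases A rule: M_exhaust, cases v rule: V_exhaust, cases w rule: V_exhaust) (simp add: algebra_simps)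
lemma det_lin: "det (mat al ** a + mat be) = al*al*det a + al*be*tr a + be*(be::'a)"
  by (cases a rule: M_exhaust) (simp add: Msimps algebra_simps)
lemma tr_lin: "tr (mat al ** a + mat be) = al * tr (a::'a^2^2)"
  by (cases a rule: M_exhaust) (simp add: Msimps algebra_simps)
lemma det_scal_mult: "det (mat c ** (a::'a^2^2)) = c * c * det a"
  by (cases a rule: M_exhaust) (simp add: Msimps algebra_simps)

definition sh :: "'a^2^2 \<Rightarrow> 'a^2^2 \<Rightarrow> 'a \<Rightarrow> bool" where
  "sh g m b \<longleftrightarrow> g ** m = (m + mat b) ** g"

lemma sh_mult: "sh g m b \<Longrightarrow> sh h m b' \<Longrightarrow> sh (g ** h) m (b + b')"
proof -
  assume g: "sh g m b" and h: "sh h m b'"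
  have "g ** h ** m = g ** (h ** m)" by (simp add: matrix_mul_assoc)
  also have "\<dots> = g ** ((m + mat b') ** h)" using h by (simp add: sh_def)
  also have "\<dots> = (g ** m + g ** mat b') ** h" by (simp add: matrix_mul_assoc ldistrib)
  also have "\<dots> = ((m + mat b) ** g + mat b' ** g) ** h" using g by (simp add: sh_def mat_comm)
  also have "\<dots> = (m + mat (b + b')) ** (g ** h)"
    by (simp add: rdistrib matrix_mul_assoc mat_add[symmetric] add.assoc)
  finally show ?thesis by (simp add: sh_def)
qed

lemma sh_adj: "g \<in> Gs \<Longrightarrow> sh g m b \<Longrightarrow> sh (adj g) m b"
proof -
  assume G: "g \<in> Gs" and g: "sh g m b"
  have "m ** adj g = (adj g ** g) ** m ** adj g" using adj_left1[OF G] by simp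
  also have "\<dots> = adj g ** (g ** m) ** adj g" by (simp add: matrix_mul_assoc)
  also have "\<dots> = adj g ** ((m + mat b) ** g) ** adj g" using g by (simp add: sh_def)
  also have "\<dots> = adj g ** (m + mat b)" using adj_right1[OF G] by (simp add: matrix_mul_assoc[symmetric])
  also have "\<dots> = adj g ** m + mat b ** adj g" by (simp add: ldistrib mat_comm)
  finally have "adj g ** m = m ** adj g + mat b ** adj g"
    by (metis madd_cancel)
  thus ?thesis by (simp add: sh_def rdistrib)
qed

lemma sh_zero: "sh g m 0 \<longleftrightarrow> g ** m = m ** g"
  by (simp add: sh_def)

lemma NL_sh:
  assumes G: "g \<in> Gs" and t: "tr m = 1" and n: "NL m g"
  shows "\<exists>b. sh g m b"
proof -
  obtain al be where e: "g ** m = (mat al ** m + mat be) ** g" using n by (auto simp: NL_def)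
  have "g ** m ** adj g = (mat al ** m + mat be) ** (g ** adj g)" using e by (simp add: matrix_mul_assoc)
  also have "\<dots> = mat al ** m + mat be" using adj_right1[OF G] by simp
  finally have "tr (g ** m ** adj g) = tr (mat al ** m + mat be)" by simp
  hence "al = 1" using tr_conj[of g m] G t by (simp add: tr_lin Gs_def)
  thus ?thesis using e by (auto simp: sh_def)
qed

lemma sh_NL: "sh g m b \<Longrightarrow> NL m g"
  unfolding sh_def NL_def by (rule exI[of _ 1], rule exI[of _ b]) simp


definition Ecal :: "'a^2^2 \<Rightarrow> 'a^2^2 \<Rightarrow> bool" where
  "Ecal x y \<longleftrightarrow> (\<exists>m. tr m = 1 \<and> NL m x \<and> NL m y) \<or> (\<exists>v. v \<noteq> 0 \<and> eig x v \<and> eig y v)"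

lemma tr1_nonscal: "tr m = 1 \<Longrightarrow> \<not> scal m"
  by (auto simp: scal_def)

lemma nu_nonscal: "v \<noteq> 0 \<Longrightarrow> \<not> scal (nu v)"
  by (cases v rule: V_exhaust) auto

lemma comm_comm:
  assumes ns: "\<not> scal m" and g: "g ** m = m ** g" and h: "h ** m = m ** h"
  shows "g ** h = h ** (g::'a^2^2)"
proof -
  obtain a b where ga: "g = mat a ** m + mat b" using comm_lemma[OF g[symmetric] ns] by blast
  obtain a' b' where hb: "h = mat a' ** m + mat b'" using comm_lemma[OF h[symmetric] ns] by blast
  show ?thesis unfolding ga hb by (rule lin_comm)
qed


lemma adj_eig:
  assumes G: "g \<in> Gs" and e: "g *v v = l *s v" and v: "v \<noteq> 0"
  shows "l \<noteq> 0 \<and> adj g *v v = inverse l *s v"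
proof -
  have "v = (adj g ** g) *v v" using adj_left1[OF G] by simp
  also have "\<dots> = adj g *v (l *s v)" using e by (simp add: matrix_vector_mul_assoc[symmetric])
  also have "\<dots> = l *s (adj g *v v)" by (simp add: mulv_smult)
  finally have h: "v = l *s (adj g *v v)" .
  have l: "l \<noteq> 0" using h v by auto
  have "inverse l *s v = inverse l *s (l *s (adj g *v v))" using h by simp
  also have "\<dots> = (inverse l * l) *s (adj g *v v)" by (simp only: vector_smult_assoc)
  also have "\<dots> = adj g *v v" using l by simp
  finally show ?thesis using l by simp
qed


lemma fix_comm_nu:
  assumes G: "g \<in> Gs" and f: "g *v v = v"
  shows "g ** nu v = nu v ** g"
proof -
  have "(g ** nu v) *v w = (nu v ** g) *v w" for w
  proof -
    have "(g ** nu v) *v w = g *v (det2 v w *s v)" by (simp add: matrix_vector_mul_assoc[symmetric] nu_mulv)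
    also have "\<dots> = det2 v w *s v" by (simp add: mulv_smult f)
    also have "\<dots> = det2 (g *v v) (g *v w) *s v"
    proof -
      have "det2 (g *v v) (g *v w) = det2 v w" using G by (simp only: det2_mulv Gs_def mem_Collect_eq mult_1)
      thus ?thesis by simp
    qed
    also have "\<dots> = (nu v ** g) *v w" by (simp add: matrix_vector_mul_assoc[symmetric] nu_mulv f)
    finally show ?thesis .
  qed
  thus ?thesis by (simp add: matrix_eq)
qed


lemma subgroup_Km: "tr m = 1 \<Longrightarrow> subgroup {g \<in> Gs. \<exists>b. sh g m b} SL"
proof (rule group.subgroupI[OF group_SL])
  show "{g \<in> Gs. \<exists>b. sh g m b} \<subseteq> carrier SL" by auto
  have "mat 1 \<in> {g \<in> Gs. \<exists>b. sh g m b}" using Gs_one sh_zero[of "mat 1" m] by auto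
  thus "{g \<in> Gs. \<exists>b. sh g m b} \<noteq> {}" by blast
next
  fix a assume a: "a \<in> {g \<in> Gs. \<exists>b. sh g m b}"
  then obtain b where ab: "a \<in> Gs" "sh a m b" by blast
  have "adj a \<in> Gs" "sh (adj a) m b" using Gs_adj[OF ab(1)] sh_adj[OF ab] by auto
  thus "inv\<^bsub>SL\<^esub> a \<in> {g \<in> Gs. \<exists>b. sh g m b}" using inv_SL[OF ab(1)] by auto
next
  fix a c assume a: "a \<in> {g \<in> Gs. \<exists>b. sh g m b}" and c: "c \<in> {g \<in> Gs. \<exists>b. sh g m b}"
  then obtain b b' where h: "a \<in> Gs" "sh a m b" "c \<in> Gs" "sh c m b'" by blast
  have "a ** c \<in> Gs" "sh (a ** c) m (b + b')" using Gs_mult[OF h(1,3)] sh_mult[OF h(2,4)] by auto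
  thus "a \<otimes>\<^bsub>SL\<^esub> c \<in> {g \<in> Gs. \<exists>b. sh g m b}" by auto
qed


lemma subgroup_Cm: "subgroup {g \<in> Gs. g ** m = m ** g} SL"
proof (rule group.subgroupI[OF group_SL])
  show "{g \<in> Gs. g ** m = m ** g} \<subseteq> carrier SL" by auto
  have "mat 1 \<in> {g \<in> Gs. g ** m = m ** g}" using Gs_one by auto
  thus "{g \<in> Gs. g ** m = m ** g} \<noteq> {}" by blast
next
  fix a assume a: "a \<in> {g \<in> Gs. g ** m = m ** g}"
  hence "a \<in> Gs" "sh a m 0" by (auto simp: sh_zero)
  hence "sh (adj a) m 0" by (rule sh_adj)
  thus "inv\<^bsub>SL\<^esub> a \<in> {g \<in> Gs. g ** m = m ** g}" using inv_SL Gs_adj \<open>a \<in> Gs\<close> by (auto simp: sh_zero)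
next
  fix a c assume a: "a \<in> {g \<in> Gs. g ** m = m ** g}" and c: "c \<in> {g \<in> Gs. g ** m = m ** g}"
  hence "a \<in> Gs" "c \<in> Gs" "sh a m 0" "sh c m 0" by (auto simp: sh_zero)
  hence "sh (a ** c) m 0" using sh_mult[of a m 0 c 0] by simp
  thus "a \<otimes>\<^bsub>SL\<^esub> c \<in> {g \<in> Gs. g ** m = m ** g}" using Gs_mult \<open>a \<in> Gs\<close> \<open>c \<in> Gs\<close> by (auto simp: sh_zero)
qed


lemma subgroup_Kv: "v \<noteq> 0 \<Longrightarrow> subgroup {g \<in> Gs. eig g v} SL"
proof (rule group.subgroupI[OF group_SL])
  assume v: "v \<noteq> 0"
  show "{g \<in> Gs. eig g v} \<subseteq> carrier SL" by auto
  have "mat 1 \<in> {g \<in> Gs. eig g v}" using Gs_one by (auto simp: eig_def intro: exI[of _ 1])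
  thus "{g \<in> Gs. eig g v} \<noteq> {}" by blast
  fix a assume a: "a \<in> {g \<in> Gs. eig g v}"
  then obtain l where h: "a \<in> Gs" "a *v v = l *s v" by (auto simp: eig_def)
  have "adj a *v v = inverse l *s v" using adj_eig[OF h v] by simp
  thus "inv\<^bsub>SL\<^esub> a \<in> {g \<in> Gs. eig g v}" using inv_SL[OF h(1)] Gs_adj[OF h(1)] by (auto simp: eig_def)
next
  fix a c assume a: "a \<in> {g \<in> Gs. eig g v}" and c: "c \<in> {g \<in> Gs. eig g v}"
  then obtain l l' where h: "a \<in> Gs" "a *v v = l *s v" "c \<in> Gs" "c *v v = l' *s v" by (auto simp: eig_def)
  have "(a ** c) *v v = (l' * l) *s v"
    using h by (simp add: matrix_vector_mul_assoc[symmetric] mulv_smult vector_smult_assoc)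
  thus "a \<otimes>\<^bsub>SL\<^esub> c \<in> {g \<in> Gs. eig g v}" using h Gs_mult by (auto simp: eig_def)
qed


lemma subgroup_Cv: "subgroup {g \<in> Gs. g *v v = v} SL"
proof (rule group.subgroupI[OF group_SL])
  show "{g \<in> Gs. g *v v = v} \<subseteq> carrier SL" by auto
  have "mat 1 \<in> {g \<in> Gs. g *v v = v}" using Gs_one by auto
  thus "{g \<in> Gs. g *v v = v} \<noteq> {}" by blast
next
  fix a assume a: "a \<in> {g \<in> Gs. g *v v = v}"
  hence h: "a \<in> Gs" "a *v v = v" by auto
  have "adj a *v v = adj a *v (a *v v)" using h by simp
  also have "\<dots> = v" using adj_left1[OF h(1)] by (simp add: matrix_vector_mul_assoc)
  finally show "inv\<^bsub>SL\<^esub> a \<in> {g \<in> Gs. g *v v = v}" using inv_SL h Gs_adj by auto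
next
  fix a c assume "a \<in> {g \<in> Gs. g *v v = v}" "c \<in> {g \<in> Gs. g *v v = v}"
  thus "a \<otimes>\<^bsub>SL\<^esub> c \<in> {g \<in> Gs. g *v v = v}" using Gs_mult
    by (auto simp: matrix_vector_mul_assoc[symmetric])
qed


lemma Ecal_solvable:
  assumes x: "x \<in> Gs" and y: "y \<in> Gs" and E: "Ecal x y"
  shows "solvable (subgroup_generated SL {x, y})"
proof -
  interpret G: group SL by (rule group_SL)
  have S: "{x, y} \<subseteq> carrier SL" using x y by simp
  from E show ?thesis unfolding Ecal_def
  proof (elim disjE exE conjE)
    fix m assume t: "tr m = 1" and nx: "NL m x" and ny: "NL m y"
    show ?thesis
    proof (rule G.solvable_of_metabelian[OF S subgroup_Km[OF t] subgroup_Cm])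
      show "{x, y} \<subseteq> {g \<in> Gs. \<exists>b. sh g m b}" using NL_sh[OF _ t] nx ny x y by auto
      fix g h assume g: "g \<in> {g \<in> Gs. \<exists>b. sh g m b}" and h: "h \<in> {g \<in> Gs. \<exists>b. sh g m b}"
      then obtain b b' where gb: "sh g m b" and hb: "sh h m b'" and gG: "g \<in> Gs" and hG: "h \<in> Gs" by auto
      have "sh (g ** h ** adj g ** adj h) m (b + b' + b + b')"
        using sh_mult[OF sh_mult[OF sh_mult[OF gb hb] sh_adj[OF gG gb]] sh_adj[OF hG hb]] .
      hence "sh (g ** h ** adj g ** adj h) m 0" by (simp add: algebra_simps)
      thus "g \<otimes>\<^bsub>SL\<^esub> h \<otimes>\<^bsub>SL\<^esub> inv\<^bsub>SL\<^esub> g \<otimes>\<^bsub>SL\<^esub> inv\<^bsub>SL\<^esub> h \<in> {g \<in> Gs. g ** m = m ** g}"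
        using gG hG by (simp add: inv_SL sh_zero Gs_mult Gs_adj)
    next
      fix g h assume g: "g \<in> {g \<in> Gs. g ** m = m ** g}" and h: "h \<in> {g \<in> Gs. g ** m = m ** g}"
      have "g ** h = h ** g"
        by (rule comm_comm[OF tr1_nonscal[OF t]]) (use g h in simp_all)
      thus "g \<otimes>\<^bsub>SL\<^esub> h = h \<otimes>\<^bsub>SL\<^esub> g" by simp
    qed
  next
    fix v assume v: "v \<noteq> 0" and ex: "eig x v" and ey: "eig y v"
    show ?thesis
    proof (rule G.solvable_of_metabelian[OF S subgroup_Kv[OF v] subgroup_Cv])
      show "{x, y} \<subseteq> {g \<in> Gs. eig g v}" using x y ex ey by blast
      fix g h assume g: "g \<in> {g \<in> Gs. eig g v}" and h: "h \<in> {g \<in> Gs. eig g v}"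
      then obtain l l' where gl: "g *v v = l *s v" and hl: "h *v v = l' *s v" and gG: "g \<in> Gs" and hG: "h \<in> Gs"
        by (auto simp: eig_def)
      have ag: "l \<noteq> 0" "adj g *v v = inverse l *s v" using adj_eig[OF gG gl v] by auto
      have ah: "l' \<noteq> 0" "adj h *v v = inverse l' *s v" using adj_eig[OF hG hl v] by auto
      have "(g ** h ** adj g ** adj h) *v v = g *v (h *v (adj g *v (adj h *v v)))"
        by (simp add: matrix_vector_mul_assoc matrix_mul_assoc)
      also have "\<dots> = (l * (l' * (inverse l * inverse l'))) *s v"
        using gl hl ag ah by (simp add: mulv_smult vector_smult_assoc)
      also have "\<dots> = v" using ag ah by (simp add: field_simps)
      finally show "g \<otimes>\<^bsub>SL\<^esub> h \<otimes>\<^bsub>SL\<^esub> inv\<^bsub>SL\<^esub> g \<otimes>\<^bsub>SL\<^esub> inv\<^bsub>SL\<^esub> h \<in> {g \<in> Gs. g *v v = v}"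
        using gG hG by (simp add: inv_SL Gs_mult Gs_adj)
    next
      fix g h assume g: "g \<in> {g \<in> Gs. g *v v = v}" and h: "h \<in> {g \<in> Gs. g *v v = v}"
      have "g ** h = h ** g"
        by (rule comm_comm[OF nu_nonscal[OF v]]) (use g h fix_comm_nu in simp_all)
      thus "g \<otimes>\<^bsub>SL\<^esub> h = h \<otimes>\<^bsub>SL\<^esub> g" by simp
    qed
  qed
qed


end

context C2 begin

lemma scal_lin: "mat c ** (mat al ** (a::'a^2^2) + mat be) = mat al ** (mat c ** a) + mat (c * be :: 'a)"
  by (cases a rule: M_exhaust) (simp add: Msimps algebra_simps)

lemma lin_mulv: "(mat al ** n + mat be) *v w = al *s (n *v w) + be *s (w::'a^2)"
  by (cases n rule: M_exhaust, cases w rule: V_exhaust) (simp add: Msimps algebra_simps)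

lemma vadd_zero: "(u::'a^2) + w = 0 \<Longrightarrow> u = w"
  by (cases u rule: V_exhaust, cases w rule: V_exhaust) (simp add: add_eq_0_iff2)

lemma vadd_cancel: "(u::'a^2) + w = w \<Longrightarrow> u = 0"
  by (cases u rule: V_exhaust, cases w rule: V_exhaust) simp

lemma smult_zero_iff: "c *s (u::'a^2) = 0 \<longleftrightarrow> c = 0 \<or> u = 0"
  by (cases u rule: V_exhaust) auto

lemma plus1_mulv: "((A::'a^2^2) + mat 1) *v v = A *v v + v"
  by (cases A rule: M_exhaust, cases v rule: V_exhaust) (simp add: Msimps algebra_simps)

lemma vadd_self: "(u::'a^2) + u = 0"
  by (cases u rule: V_exhaust) simp

lemma lin_shift: "mat al ** a + mat (1 + al) = mat al ** (a + mat 1) + (mat 1 :: 'a^2^2)"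
  by (cases a rule: M_exhaust) (simp add: Msimps algebra_simps)

lemma NL_of_comm:
  assumes a: "a \<in> Gs" "a \<noteq> mat 1" and h: "h \<in> Gs"
    and c: "(h ** a ** adj h) ** a = a ** (h ** a ** adj h)"
  shows "NL a h"
proof -
  have ns: "\<not> scal a" using a scal_det1 Gs_def by auto
  obtain al be where e: "h ** a ** adj h = mat al ** a + mat be" using comm_lemma[OF c[symmetric] ns] by blast
  have "h ** a = h ** a ** (adj h ** h)" using adj_left1[OF h] by simp
  also have "\<dots> = (h ** a ** adj h) ** h" by (simp add: matrix_mul_assoc)
  also have "\<dots> = (mat al ** a + mat be) ** h" using e by simp
  finally show ?thesis unfolding NL_def by blast
qed

lemma NL_scale: "NL a g \<Longrightarrow> NL (mat c ** a) g"
proof -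
  assume "NL a g"
  then obtain al be where e: "g ** a = (mat al ** a + mat be) ** g" by (auto simp: NL_def)
  have "g ** (mat c ** a) = mat c ** (g ** a)" by (simp add: matrix_mul_assoc mat_comm)
  also have "\<dots> = (mat c ** (mat al ** a + mat be)) ** g" using e by (simp add: matrix_mul_assoc)
  also have "\<dots> = (mat al ** (mat c ** a) + mat (c * be)) ** g" by (simp add: scal_lin)
  finally show ?thesis unfolding NL_def by blast
qed

lemma NL_fix:
  assumes aG: "a \<in> Gs" and a1: "a \<noteq> mat 1" and ta: "tr a = 0" and av: "a *v v = v" and v: "v \<noteq> 0"
    and hG: "h \<in> Gs" and N: "NL a h"
  shows "eig h v"
proof -
  obtain al be where e: "h ** a = (mat al ** a + mat be) ** h" using N by (auto simp: NL_def)
  let ?X = "mat al ** a + mat be"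
  have X: "h ** a ** adj h = ?X" using e adj_right1[OF hG] by (simp add: matrix_mul_assoc[symmetric])
  have "det ?X = 1" using X[symmetric] aG hG Gs_adj by (simp add: det_mul Gs_def)
  hence "(al + be) * (al + be) = 1" using aG ta by (simp add: det_lin Gs_def sq_sum)
  hence abe: "al + be = 1" by simp
  have be: "be = 1 + al"
  proof -
    have "be = al + (al + be)" by simp
    thus ?thesis using abe by (simp add: add.commute)
  qed
  have al: "al \<noteq> 0"
  proof
    assume "al = 0"
    hence "h ** a = h" using e be by simp
    hence "adj h ** h ** a = adj h ** h" by (simp add: matrix_mul_assoc[symmetric])
    thus False using a1 adj_left1[OF hG] by simp
  qed
  let ?n = "a + mat 1"
  let ?w = "h *v v"
  have "?X *v ?w = (h ** a) *v v" using e by (simp add: matrix_vector_mul_assoc)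
  also have "\<dots> = ?w" using av by (simp add: matrix_vector_mul_assoc[symmetric])
  finally have "?X *v ?w = ?w" .
  hence "(mat al ** ?n + mat 1) *v ?w = ?w" using be lin_shift by simp
  hence "al *s (?n *v ?w) + ?w = ?w" by (simp add: lin_mulv)
  hence "al *s (?n *v ?w) = 0" by (rule vadd_cancel)
  hence nw: "?n *v ?w = 0" using al by (simp add: smult_zero_iff)
  have nv: "?n *v v = 0"
    using av by (simp add: plus1_mulv vadd_self)
  have n0: "?n \<noteq> 0"
  proof
    assume "?n = 0"
    hence "a = mat 1" using madd_cancel[of a "mat 1" 0] by simp
    thus False using a1 by simp
  qed
  have "det2 v ?w = 0" using basis_zero[OF nv nw] n0 by blast
  then obtain k where "?w = k *s v" using par v by blast
  thus ?thesis by (auto simp: eig_def)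
qed


lemma solvable_Ecal:
  assumes x: "x \<in> Gs" and y: "y \<in> Gs" and sol: "solvable (subgroup_generated SL {x, y})"
  shows "Ecal x y"
proof -
  interpret G: group SL by (rule group_SL)
  have S: "{x, y} \<subseteq> carrier SL" using x y by simp
  let ?H = "generate SL {x, y}"
  have xH: "x \<in> ?H" and yH: "y \<in> ?H" by (auto intro: generate.incl)
  have HG: "?H \<subseteq> Gs"
  proof
    fix h assume "h \<in> ?H"
    thus "h \<in> Gs" using G.generate_in_carrier[OF S, of h] by simp
  qed
  from G.solvable_gen_elem[OF S sol]
  show ?thesis
  proof (elim disjE bexE conjE)
    assume "?H = {\<one>\<^bsub>SL\<^esub>}"
    hence "x = mat 1" "y = mat 1" using xH yH by auto
    thus ?thesis unfolding Ecal_def eig_def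
      by (intro disjI2 exI[of _ "V 1 0"]) (auto intro: exI[of _ 1])
  next
    fix a assume aH: "a \<in> ?H" and a1: "a \<noteq> \<one>\<^bsub>SL\<^esub>"
      and C: "\<forall>h\<in>?H. h \<otimes>\<^bsub>SL\<^esub> a \<otimes>\<^bsub>SL\<^esub> inv\<^bsub>SL\<^esub> h \<otimes>\<^bsub>SL\<^esub> a = a \<otimes>\<^bsub>SL\<^esub> (h \<otimes>\<^bsub>SL\<^esub> a \<otimes>\<^bsub>SL\<^esub> inv\<^bsub>SL\<^esub> h)"
    have aG: "a \<in> Gs" using aH HG by blast
    have a1': "a \<noteq> mat 1" using a1 by simp
    have NLh: "NL a h" if "h \<in> ?H" for h
    proof -
      have hG: "h \<in> Gs" using that HG by blast
      have "h ** a ** inv\<^bsub>SL\<^esub> h ** a = a ** (h ** a ** inv\<^bsub>SL\<^esub> h)"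
        using C that by simp
      hence "(h ** a ** adj h) ** a = a ** (h ** a ** adj h)"
        by (simp only: inv_SL[OF hG])
      thus ?thesis by (rule NL_of_comm[OF aG a1' hG])
    qed
    show ?thesis
    proof (cases "tr a = 0")
      case False
      let ?m = "mat (inverse (tr a)) ** a"
      have "tr ?m = 1" using False by (simp add: tr_scale)
      moreover have "NL ?m x" "NL ?m y" using NLh[OF xH] NLh[OF yH] by (auto intro: NL_scale)
      ultimately show ?thesis unfolding Ecal_def by blast
    next
      case True
      have "det (a + mat 1) = 0" using aG True by (simp add: det_plus Gs_def)
      then obtain v where v: "v \<noteq> 0" "(a + mat 1) *v v = 0" using kernel_ex by blast
      have av: "a *v v = v" using v(2) by (simp add: plus1_mulv vadd_zero)
      have "eig x v" "eig y v" using NL_fix[OF aG a1' True av v(1)] NLh xH yH x y by auto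
      thus ?thesis unfolding Ecal_def using v(1) by blast
    qed
  qed
qed

lemma Sol_SL: "x \<in> Gs \<Longrightarrow> Sol SL x = {y \<in> Gs. Ecal x y}"
  unfolding Sol_def using solvable_Ecal Ecal_solvable by auto

end

context C2 begin

lemma mscale_cancel: "mat c ** (A::'a^2^2) = mat c ** B \<Longrightarrow> c \<noteq> 0 \<Longrightarrow> A = B"
  by (cases A rule: M_exhaust, cases B rule: M_exhaust) (simp add: Msimps)

lemma tr_nonscal: "tr y \<noteq> 0 \<Longrightarrow> \<not> scal y"
  by (auto simp: scal_def)

lemma NL_sh':
  assumes G: "g \<in> Gs" and t: "tr m \<noteq> 0" and n: "NL m g"
  shows "\<exists>b. sh g m b"
proof -
  obtain al be where e: "g ** m = (mat al ** m + mat be) ** g" using n by (auto simp: NL_def)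
  have "g ** m ** adj g = (mat al ** m + mat be) ** (g ** adj g)" using e by (simp add: matrix_mul_assoc)
  also have "\<dots> = mat al ** m + mat be" using adj_right1[OF G] by simp
  finally have "tr (g ** m ** adj g) = tr (mat al ** m + mat be)" by simp
  hence "tr m = al * tr m" using tr_conj[of g m] G by (simp add: tr_lin Gs_def)
  hence "al = 1" using t by simp
  thus ?thesis using e by (auto simp: sh_def)
qed

lemma sh_SS_comm:
  assumes yG: "y \<in> Gs" and t: "tr y \<noteq> 0" and s: "sh y m b"
  shows "y ** m = m ** y"
proof -
  have "sh (y ** y) m (b + b)" by (rule sh_mult[OF s s])
  hence "(y ** y) ** m = m ** (y ** y)" by (simp add: sh_def)
  hence "(mat (tr y) ** y + mat 1) ** m = m ** (mat (tr y) ** y + mat 1)"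
    using CH[of y] yG by (simp add: Gs_def)
  hence "mat (tr y) ** (y ** m) + m = mat (tr y) ** (m ** y) + m"
    by (simp add: rdistrib ldistrib matrix_mul_assoc mat_comm)
  hence "mat (tr y) ** (y ** m) = mat (tr y) ** (m ** y)" by simp
  thus ?thesis using mscale_cancel t by blast
qed

lemma lin_lin: "mat al ** (mat a ** (m::'a^2^2) + mat b) + mat be = mat a ** (mat al ** m + mat be) + mat (al * b + be + a * be :: 'a)"
  by (cases m rule: M_exhaust) (simp add: Msimps algebra_simps)

lemma glin: "g ** (mat al ** m + mat be) = mat al ** (g ** m) + mat be ** (g::'a^2^2)"
  by (cases g rule: M_exhaust, cases m rule: M_exhaust) (simp add: Msimps algebra_simps)

lemma linmul: "(mat al ** X + mat be) ** g = mat al ** (X ** g) + mat be ** (g::'a^2^2)"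
  by (cases g rule: M_exhaust, cases X rule: M_exhaust) (simp add: Msimps algebra_simps)

lemma NL_lin: "NL m g \<Longrightarrow> NL (mat al ** m + mat be) g"
proof -
  assume "NL m g"
  then obtain a b where e: "g ** m = (mat a ** m + mat b) ** g" by (auto simp: NL_def)
  have "g ** (mat al ** m + mat be) = mat al ** ((mat a ** m + mat b) ** g) + mat be ** g"
    by (simp only: glin e)
  also have "\<dots> = (mat al ** (mat a ** m + mat b) + mat be) ** g"
    by (simp only: linmul)
  also have "\<dots> = (mat a ** (mat al ** m + mat be) + mat (al * b + be + a * be)) ** g"
    by (subst lin_lin[of al a m b be]) (rule refl)
  finally have "g ** (mat al ** m + mat be) = (mat a ** (mat al ** m + mat be) + mat (al * b + be + a * be)) ** g" .
  thus ?thesis unfolding NL_def by (intro exI)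
qed

lemma lin_inv: "m = mat al ** (y::'a^2^2) + mat be \<Longrightarrow> al \<noteq> 0 \<Longrightarrow> y = mat (inverse al) ** m + mat (be * inverse al :: 'a)"
  by (cases y rule: M_exhaust) (simp add: Msimps field_simps)

lemma NL_self: "NL m m"
  unfolding NL_def by (rule exI[of _ 1], rule exI[of _ 0]) simp

lemma NL_comm: "g ** m = m ** g \<Longrightarrow> NL m g"
  unfolding NL_def by (rule exI[of _ 1], rule exI[of _ 0]) simp

lemma SSchar:
  assumes gG: "g \<in> Gs" and yG: "y \<in> Gs" and t: "tr y \<noteq> 0"
  shows "Ecal g y \<longleftrightarrow> NL y g \<or> (\<exists>v. v \<noteq> 0 \<and> eig g v \<and> eig y v)"
proof
  assume "Ecal g y"
  thus "NL y g \<or> (\<exists>v. v \<noteq> 0 \<and> eig g v \<and> eig y v)" unfolding Ecal_def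
  proof (elim disjE exE conjE)
    fix m assume tm: "tr m = 1" and ng: "NL m g" and ny: "NL m y"
    obtain b where "sh y m b" using NL_sh[OF yG tm ny] by blast
    hence "y ** m = m ** y" by (rule sh_SS_comm[OF yG t])
    then obtain al be where m: "m = mat al ** y + mat be" using comm_lemma tr_nonscal[OF t] by blast
    have al: "al \<noteq> 0" using tm m by (auto simp: tr_lin)
    have "y = mat (inverse al) ** m + mat (be * inverse al)" by (rule lin_inv[OF m al])
    hence "NL y g" using NL_lin[OF ng] by simp
    thus ?thesis by blast
  qed blast
next
  assume H: "NL y g \<or> (\<exists>v. v \<noteq> 0 \<and> eig g v \<and> eig y v)"
  show "Ecal g y"
  proof (cases "NL y g")
    case True
    let ?m = "mat (inverse (tr y)) ** y"
    have "tr ?m = 1" using t by (simp add: tr_scale)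
    moreover have "NL ?m g" by (rule NL_scale[OF True])
    moreover have "NL ?m y" by (rule NL_scale[OF NL_self])
    ultimately show ?thesis unfolding Ecal_def by blast
  next
    case False
    thus ?thesis using H unfolding Ecal_def by blast
  qed
qed

lemma SSSS:
  assumes xG: "x \<in> Gs" and yG: "y \<in> Gs" and tx: "tr x \<noteq> 0" and ty: "tr y \<noteq> 0"
  shows "Ecal x y \<longleftrightarrow> x ** y = y ** x \<or> (\<exists>v. v \<noteq> 0 \<and> eig x v \<and> eig y v)"
proof -
  have "NL y x \<longleftrightarrow> x ** y = y ** x"
  proof
    assume "NL y x"
    then obtain b where "sh x y b" using NL_sh'[OF xG ty] by blast
    thus "x ** y = y ** x" by (rule sh_SS_comm[OF xG tx])
  qed (rule NL_comm)
  thus ?thesis using SSchar[OF xG yG ty] by simp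
qed

lemma Ecal_sym: "Ecal x y = Ecal y x"
  unfolding Ecal_def by blast

lemma smult_add_distrib: "(a::'a) *s (u::'a^2) + b *s u = (a + b) *s u"
  by (cases u rule: V_exhaust) (simp add: algebra_simps)

lemma eig_lin: "eig x v \<Longrightarrow> eig (mat al ** x + mat be) v"
proof -
  assume "eig x v"
  then obtain l where "x *v v = l *s v" by (auto simp: eig_def)
  hence "(mat al ** x + mat be) *v v = (al * l + be) *s v"
    by (simp add: lin_mulv vector_smult_assoc smult_add_distrib)
  thus ?thesis unfolding eig_def by blast
qed

lemma SS_same:
  assumes xG: "x \<in> Gs" and x'G: "x' \<in> Gs" and tx: "tr x \<noteq> 0" and c: "x ** x' = x' ** x"
    and yG: "y \<in> Gs" and E: "Ecal x y"
  shows "Ecal x' y"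
proof -
  obtain al be where x': "x' = mat al ** x + mat be" using comm_lemma[OF c tr_nonscal[OF tx]] by blast
  from E[unfolded Ecal_def] show ?thesis
  proof (elim disjE exE conjE)
    fix m assume tm: "tr m = 1" and nx: "NL m x" and ny: "NL m y"
    obtain b where "sh x m b" using NL_sh[OF xG tm nx] by blast
    hence xm: "x ** m = m ** x" by (rule sh_SS_comm[OF xG tx])
    obtain a' b' where m: "m = mat a' ** x + mat b'" using comm_lemma[OF xm tr_nonscal[OF tx]] by blast
    have "x' ** m = m ** x'" unfolding x' m by (rule lin_comm)
    hence "NL m x'" by (rule NL_comm)
    thus ?thesis unfolding Ecal_def using tm ny by blast
  next
    fix v assume v: "v \<noteq> 0" "eig x v" "eig y v"
    have "eig x' v" unfolding x' by (rule eig_lin[OF v(2)])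
    thus ?thesis unfolding Ecal_def using v by blast
  qed
qed

end

context C2 begin

lemma T_Gs: "T u \<in> Gs" by (simp add: Gs_def det_T)

lemma T_ne1: "u \<noteq> 0 \<Longrightarrow> T u \<noteq> mat 1"
  by (cases u rule: V_exhaust) (auto simp: Msimps)

lemma T_nonscal: "u \<noteq> 0 \<Longrightarrow> \<not> scal (T u)"
  using T_ne1 scal_det1 T_Gs Gs_def by auto

lemma det2_sym: "det2 u w = det2 w (u::'a^2)"
  by (simp add: det2_def algebra_simps)

lemma det2_smult: "det2 (k *s u) w = k * det2 u (w::'a^2)"
  by (simp add: det2_def algebra_simps)

lemma T_eig_only:
  assumes e: "eig (T u) w" and w: "w \<noteq> 0"
  shows "det2 u w = 0"
proof -
  obtain l where l: "T u *v w = l *s w" using e by (auto simp: eig_def)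
  obtain a b where u: "u = V a b" by (rule V_exhaust)
  obtain x y where wv: "w = V x y" by (rule V_exhaust)
  let ?D = "a * y + b * x"
  have e1: "(1 + a*b) * x + a*a*y = l * x" and e2: "b*b*x + (1 + a*b)*y = l * y"
    using l u wv by simp_all
  have f1: "a * ?D = (l + 1) * x"
  proof -
    have "a * ?D + (l + 1) * x = ((1 + a*b) * x + a*a*y) + l * x" by (simp add: algebra_simps)
    also have "\<dots> = 0" using e1 by simp
    finally show ?thesis by (simp add: add_eq_0_iff2)
  qed
  have f2: "b * ?D = (l + 1) * y"
  proof -
    have "b * ?D + (l + 1) * y = (b*b*x + (1 + a*b)*y) + l * y" by (simp add: algebra_simps)
    also have "\<dots> = 0" using e2 by simp
    finally show ?thesis by (simp add: add_eq_0_iff2)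
  qed
  have "?D * ?D = y * (a * ?D) + x * (b * ?D)" by (simp add: algebra_simps)
  also have "\<dots> = 0" using f1 f2 by (simp add: algebra_simps)
  finally have "?D = 0" by simp
  thus ?thesis using u wv by simp
qed

lemma eig_smult: "eig x w \<Longrightarrow> eig x (c *s w)"
  unfolding eig_def by (auto simp: mulv_smult vector_smult_assoc mult.commute)

lemma eig_par: "eig y w \<Longrightarrow> w \<noteq> 0 \<Longrightarrow> det2 u w = 0 \<Longrightarrow> eig y u"
proof -
  assume e: "eig y w" and w: "w \<noteq> 0" and d: "det2 u w = 0"
  have "det2 w u = 0" using d det2_sym by simp
  then obtain k where "u = k *s w" using par w by blast
  thus ?thesis using eig_smult[OF e] by simp
qed

lemma Inv_T:
  assumes G: "g \<in> Gs" and t: "tr g = 0" and g1: "g \<noteq> mat 1"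
  shows "\<exists>u. u \<noteq> 0 \<and> g = T u"
proof -
  obtain a b c d where g: "g = M a b c d" by (rule M_exhaust)
  have da: "d = a" using t g by (simp add: add_eq_0_iff2)
  have det: "a * a + b * c = 1" using G g da by (simp add: Gs_def)
  obtain p where p: "p * p = b" using sqrt_ex by blast
  obtain q where q: "q * q = c" using sqrt_ex by blast
  have "(p * q) * (p * q) = (1 + a) * (1 + a)"
  proof -
    have "(p * q) * (p * q) = b * c" using p q by (simp add: algebra_simps)
    also have "\<dots> = 1 + a * a"
    proof -
      have "b * c = a * a + (a * a + b * c)" by simp
      also have "\<dots> = a * a + 1" using det by simp
      finally show ?thesis by (simp add: add.commute)
    qed
    also have "\<dots> = (1 + a) * (1 + a)" by (simp add: sq_sum)
    finally show ?thesis .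
  qed
  hence pq: "p * q = 1 + a" by simp
  have u0: "V p q \<noteq> 0"
  proof
    assume "V p q = 0"
    hence "p = 0" "q = 0" by auto
    hence "b = 0" "c = 0" "a = 1" using p q pq by (auto simp: add_eq_0_iff2)
    thus False using g1 g da by (simp add: Msimps)
  qed
  have "g = T (V p q)" using g da p q pq by (simp add: algebra_simps)
  thus ?thesis using u0 by blast
qed

lemma det_one_eq: "det (y + mat b) = 1 \<Longrightarrow> det y = 1 \<Longrightarrow> b = 0 \<or> b = tr (y::'a^2^2)"
proof -
  assume "det (y + mat b) = 1" "det y = 1"
  hence "b * tr y + b * b = 0" by (simp add: det_plus add.assoc)
  hence "b * (tr y + b) = 0" by (simp add: algebra_simps)
  thus ?thesis by (auto simp: add_eq_0_iff2)
qed

lemma NLT: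
  assumes yG: "y \<in> Gs" and t: "tr y \<noteq> 0" and w: "w \<noteq> 0" and ne: "\<not> eig y w" and N: "NL y (T w)"
  shows "sh (T w) y (tr y)"
proof -
  obtain b where s: "sh (T w) y b" using NL_sh'[OF T_Gs t N] by blast
  have "T w ** y ** adj (T w) = y + mat b"
    using s adj_right1[OF T_Gs] by (simp add: sh_def matrix_mul_assoc[symmetric])
  moreover have "det (T w ** y ** adj (T w)) = 1"
    using yG Gs_adj[OF T_Gs, of w] T_Gs[of w] by (simp add: det_mul Gs_def)
  ultimately have "det (y + mat b) = 1" by simp
  hence b: "b = 0 \<or> b = tr y" using det_one_eq yG by (simp add: Gs_def)
  have "b \<noteq> 0"
  proof
    assume "b = 0"
    hence "T w ** y = y ** T w" using s by (simp add: sh_def)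
    then obtain al be where "y = mat al ** T w + mat be" using comm_lemma T_nonscal[OF w] by blast
    hence "eig y w" using eig_lin[of "T w" w al be] T_fix[of w] by (simp add: eig_def) (metis vector_smult_lid)
    thus False using ne by simp
  qed
  thus ?thesis using b s by simp
qed


lemma eig_unscale: "eig y (k *s u) \<Longrightarrow> k \<noteq> 0 \<Longrightarrow> eig y u"
  using eig_smult[of y "k *s u" "inverse k"] by (simp add: vector_smult_assoc)

lemma smult_nz: "u \<noteq> 0 \<Longrightarrow> k \<noteq> 0 \<Longrightarrow> k *s u \<noteq> (0::'a^2)"
  by (simp add: smult_zero_iff)

lemma T_Ecal_NL:
  assumes yG: "y \<in> Gs" and t: "tr y \<noteq> 0" and u: "u \<noteq> 0" and ne: "\<not> eig y u"
    and E: "Ecal y (T u)"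
  shows "sh (T u) y (tr y)"
proof -
  have "Ecal (T u) y" using E Ecal_sym by simp
  hence "NL y (T u) \<or> (\<exists>v. v \<noteq> 0 \<and> eig (T u) v \<and> eig y v)" using SSchar[OF T_Gs yG t] by simp
  moreover have "\<not> (\<exists>v. v \<noteq> 0 \<and> eig (T u) v \<and> eig y v)"
  proof
    assume "\<exists>v. v \<noteq> 0 \<and> eig (T u) v \<and> eig y v"
    then obtain v where v: "v \<noteq> 0" "eig (T u) v" "eig y v" by blast
    have "det2 u v = 0" by (rule T_eig_only[OF v(2,1)])
    hence "eig y u" using eig_par[OF v(3) v(1)] by simp
    thus False using ne by simp
  qed
  ultimately have "NL y (T u)" by blast
  thus ?thesis by (rule NLT[OF yG t u ne])
qed

lemma UNIQ:
  assumes yG: "y \<in> Gs" and t: "tr y \<noteq> 0" and u: "u \<noteq> 0" and ne: "\<not> eig y u"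
    and k: "k \<noteq> 0" and l: "l \<noteq> 0" and kl: "k \<noteq> l"
    and Ek: "Ecal y (T (k *s u))" and El: "Ecal y (T (l *s u))"
  shows False
proof -
  have nek: "\<not> eig y (k *s u)" using ne eig_unscale k by blast
  have nel: "\<not> eig y (l *s u)" using ne eig_unscale l by blast
  have sk: "sh (T (k *s u)) y (tr y)" by (rule T_Ecal_NL[OF yG t smult_nz[OF u k] nek Ek])
  have sl: "sh (T (l *s u)) y (tr y)" by (rule T_Ecal_NL[OF yG t smult_nz[OF u l] nel El])
  have "sh (T (k *s u) ** T (l *s u)) y (tr y + tr y)" by (rule sh_mult[OF sk sl])
  hence "sh (T ((k + l) *s u)) y 0" by (simp add: T_scale_mult)
  hence c: "T ((k + l) *s u) ** y = y ** T ((k + l) *s u)" by (simp add: sh_zero)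
  have kl0: "k + l \<noteq> 0" using kl by (auto simp: add_eq_0_iff2)
  have nz: "(k + l) *s u \<noteq> 0" by (rule smult_nz[OF u kl0])
  obtain al be where "y = mat al ** T ((k + l) *s u) + mat be"
    using comm_lemma[OF c T_nonscal[OF nz]] by blast
  moreover have "eig (T ((k + l) *s u)) ((k + l) *s u)"
    using T_fix unfolding eig_def by (metis vector_smult_lid)
  ultimately have "eig y ((k + l) *s u)" using eig_lin by simp
  hence "eig y u" using eig_unscale kl0 by blast
  thus False using ne by simp
qed

lemma adj_tr: "adj A = A + mat (tr (A::'a^2^2))"
  by (cases A rule: M_exhaust) (simp add: Msimps)

lemma adj_mult: "adj (A ** B) = adj B ** adj (A::'a^2^2)"
  by (cases A rule: M_exhaust, cases B rule: M_exhaust) (simp add: algebra_simps)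

lemma adj_T: "adj (T u) = T u"
  using adj_tr[of "T u"] tr_T[of u] by simp

lemma invol_sq: "z \<in> Gs \<Longrightarrow> tr z = 0 \<Longrightarrow> z ** z = mat 1"
  using CH[of z] by (simp add: Gs_def)

lemma adj_invol: "tr z = 0 \<Longrightarrow> adj z = z"
  using adj_tr[of z] by simp

lemma DIH:
  assumes d: "det2 u v \<noteq> 0"
  shows "T u ** T v \<in> Gs \<and> tr (T u ** T v) \<noteq> 0 \<and> sh (T u) (T u ** T v) (tr (T u ** T v))
    \<and> \<not> eig (T u ** T v) u \<and> \<not> eig (T u ** T v) v"
proof -
  let ?y = "T u ** T v"
  have yG: "?y \<in> Gs" using Gs_mult T_Gs by blast
  have t: "tr ?y \<noteq> 0" using d by (simp add: tr_TT)
  have "T u ** ?y = T v" using T_sq[of u] by (simp add: matrix_mul_assoc)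
  also have "\<dots> = adj ?y ** T u" using T_sq[of u] by (simp add: adj_mult adj_T matrix_mul_assoc[symmetric])
  also have "\<dots> = (?y + mat (tr ?y)) ** T u" by (simp only: adj_tr[of ?y])
  finally have s: "sh (T u) ?y (tr ?y)" by (simp add: sh_def)
  have u0: "u \<noteq> 0" using d by (auto simp: det2_def)
  have v0: "v \<noteq> 0" using d by (auto simp: det2_def)
  have n1: "\<not> eig ?y u"
  proof
    assume "eig ?y u"
    then obtain l where l: "?y *v u = l *s u" by (auto simp: eig_def)
    have "T v *v u = (T u ** ?y) *v u" using T_sq[of u] by (simp add: matrix_mul_assoc)
    also have "\<dots> = l *s u" using l T_fix[of u] by (simp add: matrix_vector_mul_assoc[symmetric] mulv_smult)
    finally have "eig (T v) u" by (auto simp: eig_def)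
    hence "det2 v u = 0" using T_eig_only u0 by blast
    thus False using d det2_sym by simp
  qed
  have n2: "\<not> eig ?y v"
  proof
    assume "eig ?y v"
    hence "eig (T u) v" using T_fix[of v] by (simp add: eig_def matrix_vector_mul_assoc[symmetric])
    hence "det2 u v = 0" using T_eig_only v0 by blast
    thus False using d by simp
  qed
  show ?thesis using yG t s n1 n2 by blast
qed

lemma mulv_zero: "(A::'a^2^2) *v 0 = 0"
  by (cases A rule: M_exhaust) (simp add: vec_eq_iff forall_2 matrix_vector_mult_def sum_2)

lemma fixvec: "g \<in> Gs \<Longrightarrow> tr g = 0 \<Longrightarrow> \<exists>v. v \<noteq> 0 \<and> g *v v = v"
proof -
  assume G: "g \<in> Gs" and t: "tr g = 0"
  have "det (g + mat 1) = 0" using G t by (simp add: det_plus Gs_def)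
  then obtain v where "v \<noteq> 0" "(g + mat 1) *v v = 0" using kernel_ex by blast
  thus ?thesis by (auto simp: plus1_mulv vadd_zero)
qed

lemma Ecal_scale_NL: "NL y z \<Longrightarrow> NL y w \<Longrightarrow> tr y \<noteq> 0 \<Longrightarrow> Ecal z w"
proof -
  assume a: "NL y z" "NL y w" "tr y \<noteq> 0"
  let ?m = "mat (inverse (tr y)) ** y"
  have "tr ?m = 1" using a(3) by (simp add: tr_scale)
  thus ?thesis unfolding Ecal_def using NL_scale[OF a(1)] NL_scale[OF a(2)] by blast
qed

lemma T2:
  assumes zG: "z \<in> Gs" and wG: "w \<in> Gs" and tz: "tr z = 0" and tw: "tr w = 0"
  shows "Ecal z w"
proof (cases "tr (z ** w) = 0")
  case False
  let ?y = "z ** w"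
  have zz: "z ** z = mat 1" by (rule invol_sq[OF zG tz])
  have ay: "adj ?y = w ** z" using adj_invol[OF tz] adj_invol[OF tw] by (simp add: adj_mult)
  have "z ** ?y = (?y + mat (tr ?y)) ** z"
    using zz by (simp add: adj_tr[symmetric] ay matrix_mul_assoc[symmetric]) (simp add: matrix_mul_assoc)
  hence n1: "NL ?y z" using sh_NL by (auto simp: sh_def)
  have "w ** ?y = (?y + mat (tr ?y)) ** w"
    by (simp add: adj_tr[symmetric] ay matrix_mul_assoc)
  hence n2: "NL ?y w" using sh_NL by (auto simp: sh_def)
  show ?thesis by (rule Ecal_scale_NL[OF n1 n2 False])
next
  case True
  let ?y = "z ** w"
  have yG: "?y \<in> Gs" by (rule Gs_mult[OF zG wG])
  have yy: "?y ** ?y = mat 1" by (rule invol_sq[OF yG True])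
  have "?y = adj ?y ** (?y ** ?y)" using adj_left1[OF yG] by (simp add: matrix_mul_assoc)
  also have "\<dots> = w ** z" using yy adj_invol[OF tz] adj_invol[OF tw] by (simp add: adj_mult)
  finally have c: "z ** w = w ** z" .
  show ?thesis
  proof (cases "z = mat 1")
    case True
    obtain v where v: "v \<noteq> 0" "w *v v = v" using fixvec[OF wG tw] by blast
    have "eig z v" "eig w v" using True v by (auto simp: eig_def intro: exI[of _ 1])
    thus ?thesis unfolding Ecal_def using v(1) by blast
  next
    case False
    obtain v where v: "v \<noteq> 0" "z *v v = v" using fixvec[OF zG tz] by blast
    let ?n = "z + mat 1"
    have nv: "?n *v v = 0" using v by (simp add: plus1_mulv vadd_self)
    have "?n *v (w *v v) = z *v (w *v v) + w *v v" by (simp add: plus1_mulv)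
    also have "\<dots> = (w ** z) *v v + w *v v" using c by (simp add: matrix_vector_mul_assoc)
    also have "\<dots> = w *v (z *v v + v)" by (simp add: matrix_vector_mul_assoc[symmetric] mulv_add)
    also have "\<dots> = w *v (?n *v v)" by (simp add: plus1_mulv)
    finally have "?n *v (w *v v) = w *v (?n *v v)" .
    hence nw: "?n *v (w *v v) = 0" using nv mulv_zero by simp
    have n0: "?n \<noteq> 0"
    proof
      assume "?n = 0"
      hence "z = mat 1" using madd_cancel[of z "mat 1" 0] by simp
      thus False using False by simp
    qed
    have "det2 v (w *v v) = 0" using basis_zero[OF nv nw] n0 by blast
    then obtain k where "w *v v = k *s v" using par v(1) by blast
    hence "eig w v" "eig z v" using v by (auto simp: eig_def intro: exI[of _ 1])
    thus ?thesis unfolding Ecal_def using v(1) by blast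
  qed
qed

end

context C2 begin

lemma matc_mulv: "mat c *v v = c *s (v::'a^2)"
  by (cases v rule: V_exhaust) (simp add: Msimps)

lemma plus_mulv: "((A::'a^2^2) + mat s) *v v = A *v v + s *s v"
  by (cases A rule: M_exhaust, cases v rule: V_exhaust) (simp add: Msimps algebra_simps)

lemma madd_mulv: "((A::'a^2^2) + B) *v v = A *v v + B *v v"
  by (cases A rule: M_exhaust, cases B rule: M_exhaust, cases v rule: V_exhaust) (simp add: algebra_simps)

lemma det_kernel: "(B::'a^2^2) *v v = 0 \<Longrightarrow> v \<noteq> 0 \<Longrightarrow> det B = 0"
proof -
  assume b: "B *v v = 0" and v: "v \<noteq> 0"
  have "det B *s v = (adj B ** B) *v v" by (simp add: adj_left matc_mulv)
  also have "\<dots> = 0" using b mulv_zero by (simp add: matrix_vector_mul_assoc[symmetric])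
  finally show ?thesis using v by (simp add: smult_zero_iff)
qed

lemma eig2:
  assumes xG: "x \<in> Gs" and t: "tr x \<noteq> 0" and e: "eig x v" and v: "v \<noteq> 0"
  shows "\<exists>w. det2 v w \<noteq> 0 \<and> eig x w"
proof -
  obtain l where l: "x *v v = l *s v" using e by (auto simp: eig_def)
  have l0: "l \<noteq> 0" using adj_eig[OF xG l v] by simp
  have "(x + mat l) *v v = 0" using l by (simp add: plus_mulv vadd_self)
  hence "det (x + mat l) = 0" using det_kernel v by blast
  hence cl: "1 + l * tr x + l * l = 0" using xG by (simp add: det_plus Gs_def)
  define m where "m = inverse l"
  have ml: "m * l = 1" using l0 by (simp add: m_def)
  have "1 + m * tr x + m * m = (m * l) * (m * l) + (m * l) * (m * tr x) + m * m"
    using ml by simp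
  also have "\<dots> = m * m * (1 + l * tr x + l * l)" by (simp add: algebra_simps)
  also have "\<dots> = 0" using cl by simp
  finally have "det (x + mat m) = 0" using xG by (simp add: det_plus Gs_def)
  then obtain w where w: "w \<noteq> 0" "(x + mat m) *v w = 0" using kernel_ex by blast
  have xw: "x *v w = m *s w" using w(2) by (simp add: plus_mulv vadd_zero)
  have "det2 v w \<noteq> 0"
  proof
    assume "det2 v w = 0"
    then obtain k where k: "w = k *s v" using par v by blast
    have xl: "x *v w = l *s w" using k l by (simp add: mulv_smult vector_smult_assoc mult.commute)
    have "(l + m) *s w = l *s w + m *s w" by (simp add: smult_add_distrib)
    also have "\<dots> = x *v w + x *v w" by (simp only: xl[symmetric] xw[symmetric])
    also have "\<dots> = 0" by (rule vadd_self)
    finally have "(l + m) *s w = 0" .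
    hence "l = m" using w(1) by (auto simp: smult_zero_iff add_eq_0_iff2)
    hence "l * l = 1" using ml by simp
    hence "l = 1" by simp
    hence "tr x = 0" using cl by simp
    thus False using t by simp
  qed
  thus ?thesis using xw unfolding eig_def by blast
qed

lemma basis_comm:
  assumes d: "det2 v w \<noteq> 0" and e: "eig x v" "eig x w" "eig x' v" "eig x' w"
  shows "x ** x' = x' ** (x::'a^2^2)"
proof -
  obtain a b c d where ab: "x *v v = a *s v" "x *v w = b *s w" "x' *v v = c *s v" "x' *v w = d *s w"
    using e by (auto simp: eig_def)
  let ?B = "x ** x' + x' ** x"
  have "?B *v v = 0" using ab
    by (simp add: madd_mulv matrix_vector_mul_assoc[symmetric] mulv_smult vector_smult_assoc mult.commute vadd_self)
  moreover have "?B *v w = 0" using ab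
    by (simp add: madd_mulv matrix_vector_mul_assoc[symmetric] mulv_smult vector_smult_assoc mult.commute vadd_self)
  ultimately have "?B = 0" using basis_zero d by blast
  thus ?thesis using madd_cancel[of "x ** x'" "x' ** x" 0] by simp
qed

lemma nonscal_noneig:
  assumes "eig x (V 1 0)" "eig x (V 0 1)" "eig x (V 1 1)"
  shows "scal (x::'a^2^2)"
proof -
  obtain a b c d where x: "x = M a b c d" by (rule M_exhaust)
  obtain l1 l2 l3 where "x *v V 1 0 = l1 *s V 1 0" "x *v V 0 1 = l2 *s V 0 1" "x *v V 1 1 = l3 *s V 1 1"
    using assms by (auto simp: eig_def)
  hence "c = 0" "b = 0" "a + b = c + d" using x by auto
  thus ?thesis using x by simp
qed

lemma nonpar_ex: "u \<noteq> 0 \<Longrightarrow> \<exists>v. det2 u v \<noteq> (0::'a)"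
proof -
  assume u: "u \<noteq> 0"
  obtain a b where uv: "u = V a b" by (rule V_exhaust)
  show ?thesis
  proof (cases "a = 0")
    case True
    hence "b \<noteq> 0" using u uv by auto
    thus ?thesis using uv True by (intro exI[of _ "V 1 0"]) simp
  next
    case False
    thus ?thesis using uv by (intro exI[of _ "V 0 1"]) simp
  qed
qed

lemma DIH2:
  assumes d: "det2 u v \<noteq> 0"
  shows "sh (T v) (T u ** T v) (tr (T u ** T v))"
proof -
  let ?y = "T u ** T v"
  have "adj ?y ** T v = T v ** (T u ** T v)" by (simp add: adj_mult adj_T matrix_mul_assoc)
  thus ?thesis by (simp add: sh_def adj_tr[symmetric])
qed

lemma gam_ex: obtains g :: 'a where "g \<noteq> 0" "g \<noteq> 1"
  using gam by blast

lemma Ecal_refl_SS: "x \<in> Gs \<Longrightarrow> tr x \<noteq> 0 \<Longrightarrow> Ecal x x"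
  using SSSS by blast

lemma Ecal_one: "x \<in> Gs \<Longrightarrow> Ecal (mat 1) x"
proof (cases "tr x = 0")
  case True
  assume "x \<in> Gs" thus ?thesis using T2[OF Gs_one _ _ True] by simp
next
  case False
  assume xG: "x \<in> Gs"
  have "NL x (mat 1)" by (rule NL_comm) simp
  thus ?thesis using SSchar[OF Gs_one xG False] by simp
qed

lemma eig_T_self: "eig (T u) u"
  using T_fix[of u] unfolding eig_def by (metis vector_smult_lid)

lemma D1_SS:
  assumes xG: "x \<in> Gs" and t: "tr x \<noteq> 0"
  shows "\<exists>u. u \<noteq> 0 \<and> \<not> Ecal x (T u)"
proof -
  obtain g :: 'a where g: "g \<noteq> 0" "g \<noteq> 1" by (rule gam_ex)
  have "\<exists>u \<in> {V 1 0, V 0 1, V 1 1}. \<not> eig x u"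
    using nonscal_noneig tr_nonscal[OF t] by blast
  then obtain u where u: "u \<in> {V 1 0, V 0 1, V 1 1}" "\<not> eig x u" by blast
  have u0: "u \<noteq> 0" using u(1) by auto
  show ?thesis
  proof (cases "Ecal x (T u)")
    case False thus ?thesis using u0 by blast
  next
    case True
    have "\<not> Ecal x (T (g *s u))"
    proof
      assume "Ecal x (T (g *s u))"
      thus False using UNIQ[OF xG t u0 u(2) _ g(1), of 1] True g(2) by simp
    qed
    thus ?thesis using smult_nz[OF u0 g(1)] by blast
  qed
qed

lemma D1_Inv:
  assumes u0: "u \<noteq> 0"
  shows "\<exists>y \<in> Gs. \<not> Ecal (T u) y"
proof -
  obtain g :: 'a where g: "g \<noteq> 0" "g \<noteq> 1" by (rule gam_ex)
  obtain v where v: "det2 u v \<noteq> 0" using nonpar_ex[OF u0] by blast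
  have d: "det2 (g *s u) v \<noteq> 0" using v g by (simp add: det2_smult)
  let ?y = "T (g *s u) ** T v"
  have D: "?y \<in> Gs" "tr ?y \<noteq> 0" "sh (T (g *s u)) ?y (tr ?y)" "\<not> eig ?y (g *s u)"
    using DIH[OF d] by auto
  have ne: "\<not> eig ?y u" using D(4) eig_smult by blast
  have "Ecal (T (g *s u)) ?y" using SSchar[OF T_Gs D(1,2)] sh_NL[OF D(3)] by simp
  hence E2: "Ecal ?y (T (g *s u))" using Ecal_sym by simp
  have "\<not> Ecal (T u) ?y"
  proof
    assume "Ecal (T u) ?y"
    hence b: "Ecal ?y (T (1 *s u))" using Ecal_sym by simp
    show False by (rule UNIQ[OF D(1,2) u0 ne one_neq_zero g(1) not_sym[OF g(2)] b E2])
  qed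
  thus ?thesis using D(1) by blast
qed

lemma D2_Inv:
  assumes u0: "u \<noteq> 0" and u'0: "u' \<noteq> 0" and ne: "T u \<noteq> T u'"
  shows "\<exists>y \<in> Gs. Ecal (T u) y \<and> \<not> Ecal (T u') y"
proof (cases "det2 u u' = 0")
  case True
  obtain k where k: "u' = k *s u" using par[OF True u0] by blast
  have k0: "k \<noteq> 0" using k u'0 by auto
  have k1: "k \<noteq> 1" using k ne by auto
  obtain v where v: "det2 u v \<noteq> 0" using nonpar_ex[OF u0] by blast
  let ?y = "T u ** T v"
  have D: "?y \<in> Gs" "tr ?y \<noteq> 0" "sh (T u) ?y (tr ?y)" "\<not> eig ?y u"
    using DIH[OF v] by auto
  have E1: "Ecal (T u) ?y" using SSchar[OF T_Gs D(1,2)] sh_NL[OF D(3)] by simp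
  have "\<not> Ecal (T u') ?y"
  proof
    assume "Ecal (T u') ?y"
    hence a: "Ecal ?y (T (k *s u))" using Ecal_sym k by simp
    have b: "Ecal ?y (T (1 *s u))" using E1 Ecal_sym by simp
    show False by (rule UNIQ[OF D(1,2) u0 D(4) one_neq_zero k0 not_sym[OF k1] b a])
  qed
  thus ?thesis using E1 D(1) by blast
next
  case False
  obtain g :: 'a where g: "g \<noteq> 0" "g \<noteq> 1" by (rule gam_ex)
  have d: "det2 u (g *s u') \<noteq> 0" using False g by (simp add: det2_sym[of u] det2_smult)
  let ?y = "T u ** T (g *s u')"
  have D: "?y \<in> Gs" "tr ?y \<noteq> 0" "sh (T u) ?y (tr ?y)" "\<not> eig ?y (g *s u')"
    using DIH[OF d] by auto
  have D2: "sh (T (g *s u')) ?y (tr ?y)" by (rule DIH2[OF d])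
  have ne': "\<not> eig ?y u'" using D(4) eig_smult by blast
  have E1: "Ecal (T u) ?y" using SSchar[OF T_Gs D(1,2)] sh_NL[OF D(3)] by simp
  have E2: "Ecal ?y (T (g *s u'))" using SSchar[OF T_Gs D(1,2)] sh_NL[OF D2] Ecal_sym by simp
  have "\<not> Ecal (T u') ?y"
  proof
    assume "Ecal (T u') ?y"
    hence b: "Ecal ?y (T (1 *s u'))" using Ecal_sym by simp
    show False by (rule UNIQ[OF D(1,2) u'0 ne' one_neq_zero g(1) not_sym[OF g(2)] b E2])
  qed
  thus ?thesis using E1 D(1) by blast
qed

lemma D3_SS:
  assumes xG: "x \<in> Gs" and x'G: "x' \<in> Gs" and t: "tr x \<noteq> 0" and t': "tr x' \<noteq> 0"
    and eq: "\<And>y. y \<in> Gs \<Longrightarrow> Ecal x y = Ecal x' y"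
  shows "x ** x' = x' ** x"
proof -
  have "Ecal x x'" using eq[OF x'G] Ecal_refl_SS[OF x'G t'] by simp
  hence "x ** x' = x' ** x \<or> (\<exists>v. v \<noteq> 0 \<and> eig x v \<and> eig x' v)" using SSSS[OF xG x'G t t'] by simp
  thus ?thesis
  proof
    assume "\<exists>v. v \<noteq> 0 \<and> eig x v \<and> eig x' v"
    then obtain v where v: "v \<noteq> 0" "eig x v" "eig x' v" by blast
    obtain w where w: "det2 v w \<noteq> 0" "eig x w" using eig2[OF xG t v(2,1)] by blast
    have w0: "w \<noteq> 0" using w(1) by (auto simp: det2_def)
    show ?thesis
    proof (cases "eig x' w")
      case True thus ?thesis using basis_comm[OF w(1) v(2) w(2) v(3)] by simp
    next
      case False
      obtain g :: 'a where g: "g \<noteq> 0" "g \<noteq> 1" by (rule gam_ex)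
      have "eig (T (1 *s w)) w" using eig_T_self by simp
      hence "Ecal x (T (1 *s w))" unfolding Ecal_def using w0 w(2) by blast
      hence a: "Ecal x' (T (1 *s w))" using eq[OF T_Gs] by simp
      have "eig (T (g *s w)) w" using eig_unscale[OF eig_T_self g(1)] by simp
      hence "Ecal x (T (g *s w))" unfolding Ecal_def using w0 w(2) by blast
      hence b: "Ecal x' (T (g *s w))" using eq[OF T_Gs] by simp
      show ?thesis by (rule FalseE, rule UNIQ[OF x'G t' w0 False one_neq_zero g(1) not_sym[OF g(2)] a b])
    qed
  qed
qed

end

context C2 begin

definition kap :: "'a^2^2 \<Rightarrow> (('a \<times> 'a) + ('a \<times> 'a)) option" where
  "kap x = (if x = mat 1 then None else if tr x = 0 then Some (Inl (x$1$2, x$2$1))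
            else Some (Inr (x$1$2 / tr x, x$2$1 / tr x)))"

definition Sx :: "'a^2^2 \<Rightarrow> ('a^2^2) set" where "Sx x = {y \<in> Gs. Ecal x y}"

lemma SS_comm_iff:
  assumes xG: "x \<in> Gs" and x'G: "x' \<in> Gs" and t: "tr x \<noteq> 0" and t': "tr x' \<noteq> 0"
  shows "x ** x' = x' ** x \<longleftrightarrow> (x$1$2 / tr x = x'$1$2 / tr x' \<and> x$2$1 / tr x = x'$2$1 / tr x')"
proof
  assume c: "x ** x' = x' ** x"
  obtain al be where e: "x' = mat al ** x + mat be" using comm_lemma[OF c tr_nonscal[OF t]] by blast
  obtain a b c d where x: "x = M a b c d" by (rule M_exhaust)
  have "tr x' = al * tr x" using e by (simp add: tr_lin)
  hence al: "al \<noteq> 0" using t' by auto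
  have "x'$1$2 = al * x$1$2" "x'$2$1 = al * x$2$1" using e x by (simp_all add: Msimps)
  thus "x$1$2 / tr x = x'$1$2 / tr x' \<and> x$2$1 / tr x = x'$2$1 / tr x'"
    using \<open>tr x' = al * tr x\<close> al t by simp
next
  assume h: "x$1$2 / tr x = x'$1$2 / tr x' \<and> x$2$1 / tr x = x'$2$1 / tr x'"
  obtain a b c d where x: "x = M a b c d" by (rule M_exhaust)
  obtain a' b' c' d' where x': "x' = M a' b' c' d'" by (rule M_exhaust)
  define al where "al = tr x' / tr x"
  have ta: "tr x' = al * tr x" using t by (simp add: al_def)
  have hb: "b' = al * b" using h t t' unfolding al_def x x' by (simp add: field_simps)
  have hc: "c' = al * c" using h t t' unfolding al_def x x' by (simp add: field_simps)
  have "a' + d' = al * (a + d)" using ta x x' by simp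
  hence hd: "d' = al * d + (a' + al * a)" by (simp add: algebra_simps) (metis add_self2 add.commute add.left_commute)
  have "x' = mat al ** x + mat (a' + al * a)"
    using x x' hb hc hd by (simp add: Msimps algebra_simps)
  moreover have "x = mat 1 ** x + mat 0" by simp
  ultimately show "x ** x' = x' ** x" using lin_comm by metis
qed


lemma Inv_eq:
  assumes xG: "x \<in> Gs" and x'G: "x' \<in> Gs" and t: "tr x = 0" and t': "tr x' = 0"
    and e1: "x$1$2 = x'$1$2" and e2: "x$2$1 = x'$2$1"
  shows "x = x'"
proof -
  obtain a b c d where x: "x = M a b c d" by (rule M_exhaust)
  obtain a' b' c' d' where x': "x' = M a' b' c' d'" by (rule M_exhaust)
  have d: "d = a" "d' = a'" using t t' x x' by (simp_all add: add_eq_0_iff2)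
  have h: "a * a + b * c = 1" "a' * a' + b' * c' = 1" using xG x'G x x' d by (simp_all add: Gs_def)
  have bc: "b = b'" "c = c'" using e1 e2 x x' by simp_all
  have "a * a + b * c = a' * a' + b * c" using h bc by simp
  hence "a * a = a' * a'" using add_right_cancel by blast
  hence "a = a'" using sq_eq_iff by blast
  thus ?thesis using x x' d e1 e2 by simp
qed

lemma tr_one: "tr (mat 1 :: 'a^2^2) = 0" by simp

lemma Ecal_ext_one:
  assumes x'G: "x' \<in> Gs" and eq: "\<And>y. y \<in> Gs \<Longrightarrow> Ecal (mat 1) y = Ecal x' y"
  shows "x' = mat 1"
proof (rule ccontr)
  assume ne: "x' \<noteq> mat 1"
  show False
  proof (cases "tr x' = 0")
    case False
    obtain u where u: "u \<noteq> 0" "\<not> Ecal x' (T u)" using D1_SS[OF x'G False] by blast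
    thus False using eq[OF T_Gs] Ecal_one[OF T_Gs] by simp
  next
    case True
    obtain u where u: "u \<noteq> 0" "x' = T u" using Inv_T[OF x'G True ne] by blast
    obtain y where y: "y \<in> Gs" "\<not> Ecal (T u) y" using D1_Inv[OF u(1)] by blast
    thus False using eq[OF y(1)] Ecal_one[OF y(1)] u(2) by simp
  qed
qed

lemma SS_Inv_diff:
  assumes xG: "x \<in> Gs" and x'G: "x' \<in> Gs" and t: "tr x \<noteq> 0" and t': "tr x' = 0"
    and eq: "\<And>y. y \<in> Gs \<Longrightarrow> Ecal x y = Ecal x' y"
  shows False
proof -
  obtain u where u: "u \<noteq> 0" "\<not> Ecal x (T u)" using D1_SS[OF xG t] by blast
  have "Ecal x' (T u)" by (rule T2[OF x'G T_Gs t' tr_T])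
  thus False using eq[OF T_Gs] u(2) by simp
qed

lemma S_eq_iff:
  assumes xG: "x \<in> Gs" and x'G: "x' \<in> Gs"
  shows "Sx x = Sx x' \<longleftrightarrow> kap x = kap x'"
proof
  assume S: "Sx x = Sx x'"
  have eq: "Ecal x y = Ecal x' y" if "y \<in> Gs" for y
    using S that unfolding Sx_def by blast
  show "kap x = kap x'"
  proof (cases "x = mat 1")
    case True
    hence "x' = mat 1" using Ecal_ext_one[OF x'G] eq by simp
    thus ?thesis using True by simp
  next
    case x1: False
    show ?thesis
    proof (cases "x' = mat 1")
      case True
      hence "x = mat 1" using Ecal_ext_one[OF xG] eq by simp
      thus ?thesis using x1 by simp
    next
      case x'1: False
      show ?thesis
      proof (cases "tr x = 0")
        case t: True
        show ?thesis
        proof (cases "tr x' = 0")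
          case t': True
          obtain u where u: "u \<noteq> 0" "x = T u" using Inv_T[OF xG t x1] by blast
          obtain u' where u': "u' \<noteq> 0" "x' = T u'" using Inv_T[OF x'G t' x'1] by blast
          have "x = x'"
          proof (rule ccontr)
            assume "x \<noteq> x'"
            then obtain y where "y \<in> Gs" "Ecal (T u) y" "\<not> Ecal (T u') y"
              using D2_Inv[OF u(1) u'(1)] u(2) u'(2) by blast
            thus False using eq u(2) u'(2) by simp
          qed
          thus ?thesis by simp
        next
          case t': False
          have False by (rule SS_Inv_diff[OF x'G xG t' t]) (use eq in simp)
          thus ?thesis ..
        qed
      next
        case t: False
        show ?thesis
        proof (cases "tr x' = 0")
          case t': True
          have False by (rule SS_Inv_diff[OF xG x'G t t' eq])
          thus ?thesis ..
        next
          case t': False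
          have "x ** x' = x' ** x" by (rule D3_SS[OF xG x'G t t' eq])
          hence "x$1$2 / tr x = x'$1$2 / tr x' \<and> x$2$1 / tr x = x'$2$1 / tr x'"
            using SS_comm_iff[OF xG x'G t t'] by simp
          thus ?thesis using x1 x'1 t t' by (simp add: kap_def)
        qed
      qed
    qed
  qed
next
  assume K: "kap x = kap x'"
  show "Sx x = Sx x'"
  proof (cases "x = mat 1")
    case True
    hence "x' = mat 1" using K by (simp add: kap_def split: if_splits)
    thus ?thesis using True by simp
  next
    case x1: False
    hence x'1: "x' \<noteq> mat 1" using K by (simp add: kap_def split: if_splits)
    show ?thesis
    proof (cases "tr x = 0")
      case t: True
      hence t': "tr x' = 0" using K x1 x'1 by (simp add: kap_def split: if_splits)
      have "x = x'" using K x1 x'1 t t' Inv_eq[OF xG x'G t t'] by (simp add: kap_def)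
      thus ?thesis by simp
    next
      case t: False
      hence t': "tr x' \<noteq> 0" using K x1 x'1 by (simp add: kap_def split: if_splits)
      have "x$1$2 / tr x = x'$1$2 / tr x' \<and> x$2$1 / tr x = x'$2$1 / tr x'"
        using K x1 x'1 t t' by (simp add: kap_def)
      hence c: "x ** x' = x' ** x" using SS_comm_iff[OF xG x'G t t'] by simp
      show ?thesis unfolding Sx_def
        using SS_same[OF xG x'G t c] SS_same[OF x'G xG t' c[symmetric]] by blast
    qed
  qed
qed

end


lemma card_image_eqrel:
  assumes "\<And>x y. x \<in> A \<Longrightarrow> y \<in> A \<Longrightarrow> f x = f y \<longleftrightarrow> g x = g y"
  shows "card (f ` A) = card (g ` A)"
proof -
  let ?h = "\<lambda>k. f (inv_into A g k)"
  have img: "f ` A = ?h ` (g ` A)"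
  proof -
    have "f x = ?h (g x)" if "x \<in> A" for x
    proof -
      have i: "inv_into A g (g x) \<in> A" using that by (simp add: inv_into_into)
      have "g (inv_into A g (g x)) = g x" using that by (simp add: f_inv_into_f)
      thus ?thesis using assms[OF i that] by simp
    qed
    thus ?thesis by (auto simp: image_iff)
  qed
  have inj: "inj_on ?h (g ` A)"
  proof (rule inj_onI)
    fix a b assume a: "a \<in> g ` A" and b: "b \<in> g ` A" and e: "?h a = ?h b"
    have ia: "inv_into A g a \<in> A" using a by (auto simp: inv_into_into)
    have ib: "inv_into A g b \<in> A" using b by (auto simp: inv_into_into)
    have "g (inv_into A g a) = g (inv_into A g b)" using assms[OF ia ib] e by simp
    thus "a = b" using a b by (simp add: f_inv_into_f)
  qed
  show ?thesis using img card_image[OF inj] by simp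
qed

context C2 begin

lemma kap_image:
  "kap ` Gs = insert None (Some ` (Inl ` (UNIV - {(0::'a,0::'a)}) \<union> Inr ` (UNIV :: ('a \<times> 'a) set)))"
proof
  show "kap ` Gs \<subseteq> insert None (Some ` (Inl ` (UNIV - {(0::'a,0::'a)}) \<union> Inr ` (UNIV :: ('a \<times> 'a) set)))"
  proof
    fix k assume "k \<in> kap ` Gs"
    then obtain x where x: "x \<in> Gs" "k = kap x" by blast
    show "k \<in> insert None (Some ` (Inl ` (UNIV - {(0::'a,0::'a)}) \<union> Inr ` (UNIV :: ('a \<times> 'a) set)))"
    proof (cases "x = mat 1 \<or> tr x \<noteq> 0")
      case True thus ?thesis using x by (auto simp: kap_def)
    next
      case False
      have "(x$1$2, x$2$1) \<noteq> (0, 0)"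
      proof
        assume z: "(x$1$2, x$2$1) = (0, 0)"
        obtain a b c d where xm: "x = M a b c d" by (rule M_exhaust)
        have "d = a" using False xm by (simp add: add_eq_0_iff2)
        moreover have "b = 0" "c = 0" using z xm by simp_all
        ultimately have "a * a = 1" using x(1) xm by (simp add: Gs_def)
        hence "x = mat 1" using xm \<open>d = a\<close> \<open>b = 0\<close> \<open>c = 0\<close> by (simp add: Msimps)
        thus False using False by simp
      qed
      thus ?thesis using x False by (auto simp: kap_def)
    qed
  qed
next
  show "insert None (Some ` (Inl ` (UNIV - {(0::'a,0::'a)}) \<union> Inr ` (UNIV :: ('a \<times> 'a) set))) \<subseteq> kap ` Gs"
  proof
    fix k assume k: "k \<in> insert None (Some ` (Inl ` (UNIV - {(0::'a,0::'a)}) \<union> Inr ` (UNIV :: ('a \<times> 'a) set)))"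
    show "k \<in> kap ` Gs"
    proof (cases k)
      case None
      have "kap (mat 1) = None" by (simp add: kap_def)
      thus ?thesis using None Gs_one by (metis image_eqI)
    next
      case (Some s)
      show ?thesis
      proof (cases s)
        case (Inl bc)
        obtain b c where bc: "bc = (b, c)" by fastforce
        have nz: "(b, c) \<noteq> (0, 0)" using k Some Inl bc by auto
        obtain a where a: "a * a = 1 + b * c" using sqrt_ex by blast
        let ?x = "M a b c a"
        have xG: "?x \<in> Gs" using a by (simp add: Gs_def)
        have x1: "?x \<noteq> mat 1" using nz by (auto simp: Msimps)
        have "kap ?x = k" using x1 Some Inl bc by (simp add: kap_def)
        thus ?thesis using xG by (metis image_eqI)
      next
        case (Inr bc)
        obtain b c where bc: "bc = (b, c)" by fastforce
        obtain g :: 'a where g: "g \<noteq> 0" "g \<noteq> 1" by (rule gam_ex)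
        obtain s :: 'a where s: "s * s + s + b * c \<noteq> 0"
        proof (cases "b * c = 0")
          case True
          have e: "g * g + g + b * c = g * (g + 1)" using True by (simp add: algebra_simps)
          have "g + 1 \<noteq> 0" using g(2) by (auto simp: add_eq_0_iff2)
          hence "g * g + g + b * c \<noteq> 0" unfolding e using g(1) by simp
          thus ?thesis using that by blast
        next
          case False
          thus ?thesis using that[of 0] by simp
        qed
        obtain r where r: "r * r = s * s + s + b * c" using sqrt_ex by blast
        have r0: "r \<noteq> 0" using r s by auto
        let ?x = "M (s / r) (b / r) (c / r) ((1 + s) / r)"
        have "det ?x = (s * (1 + s) + b * c) / (r * r)" using r0 by (simp add: field_simps)
        also have "\<dots> = 1" using r r0 s by (simp add: algebra_simps)
        finally have xG: "?x \<in> Gs" by (simp add: Gs_def)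
        have tx: "tr ?x = 1 / r" by (simp add: add_divide_distrib[symmetric] add.assoc[symmetric])
        have tx0: "tr ?x \<noteq> 0" using tx r0 by simp
        have x1: "?x \<noteq> mat 1"
        proof
          assume h: "?x = mat 1"
          have "tr ?x = tr (mat 1 :: 'a^2^2)" by (simp only: h)
          thus False using tx0 by simp
        qed
        have "kap ?x = Some (Inr (b, c))" using x1 tx0 tx r0 by (simp add: kap_def)
        thus ?thesis using xG Some Inr bc by (metis image_eqI)
      qed
    qed
  qed
qed


lemma card_kap: "card (kap ` Gs) = 2 * CARD('a) * CARD('a)"
proof -
  let ?A = "UNIV - {(0::'a, 0::'a)}"
  let ?B = "UNIV :: ('a \<times> 'a) set"
  let ?X = "Inl ` ?A \<union> Inr ` ?B"
  have cB: "card ?B = CARD('a) * CARD('a)"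
    by (simp add: UNIV_Times_UNIV[symmetric] card_cartesian_product del: UNIV_Times_UNIV)
  have pos: "CARD('a) * CARD('a) \<ge> 1"
    by (simp add: Suc_le_eq)
  have cA: "card ?A = CARD('a) * CARD('a) - 1" using cB by (simp add: card_Diff_singleton)
  have cX: "card ?X = card ?A + card ?B"
    by (subst card_Un_disjoint) (auto simp: card_image inj_on_def)
  have "card (kap ` Gs) = card (insert None (Some ` ?X))" by (simp only: kap_image)
  also have "\<dots> = Suc (card (Some ` ?X))" by (rule card_insert_disjoint) auto
  also have "\<dots> = Suc (card ?X)" by (simp add: card_image)
  also have "\<dots> = 2 * CARD('a) * CARD('a)" using cX cA cB pos by simp
  finally show ?thesis .
qed

lemma card_Sx: "card (Sx ` Gs) = 2 * CARD('a) * CARD('a)"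
  using card_image_eqrel[of Gs Sx kap] S_eq_iff card_kap by simp

abbreviation PSL where "PSL \<equiv> PSL2 TYPE('a)"

lemma scalars_one: "SL2_scalars TYPE('a) = {mat 1}"
  using scal_det1 Gs_one by (auto simp: SL2_scalars_def scal_def Gs_def)

lemma PSL_eq: "PSL = SL Mod {mat 1}"
  by (simp add: PSL2_def scalars_one)

lemma rcoset_one: "{mat 1} #>\<^bsub>SL\<^esub> a = {a}"
  by (simp add: r_coset_def)

lemma carrier_PSL: "carrier PSL = (\<lambda>a. {a}) ` Gs"
  by (auto simp: PSL_eq FactGroup_def RCOSETS_def rcoset_one)

lemma mult_PSL: "{a} \<otimes>\<^bsub>PSL\<^esub> {b} = {a ** b}"
  by (simp add: PSL_eq FactGroup_def set_mult_def)

lemma group_PSL: "group PSL"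
proof -
  have "{\<one>\<^bsub>SL\<^esub>} \<lhd> SL" by (rule group.one_is_normal[OF group_SL])
  hence "{mat 1} \<lhd> SL" by simp
  thus ?thesis unfolding PSL_eq by (rule normal.factorgroup_is_group)
qed

lemma iso_phi: "(\<lambda>a. {a}) \<in> iso SL PSL"
proof -
  have "(\<lambda>a. {a}) \<in> hom SL PSL"
    unfolding hom_def using carrier_PSL mult_PSL Gs_mult by auto
  moreover have "bij_betw (\<lambda>a. {a}) (carrier SL) (carrier PSL)"
    unfolding bij_betw_def inj_on_def using carrier_PSL by auto
  ultimately show ?thesis by (simp add: iso_def)
qed

lemma sol_transfer:
  assumes x: "x \<in> Gs" and y: "y \<in> Gs"
  shows "solvable (subgroup_generated PSL {{x}, {y}}) \<longleftrightarrow> solvable (subgroup_generated SL {x, y})"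
proof -
  let ?f = "\<lambda>a::'a^2^2. {a}"
  have gh: "group_hom SL PSL ?f"
    using group_SL group_PSL iso_phi by (simp add: group_hom_def group_hom_axioms_def iso_def)
  have i: "?f \<in> iso (subgroup_generated SL {x, y}) (subgroup_generated PSL {{x}, {y}})"
    using group_hom.iso_between_subgroups[OF gh iso_phi, of "{x, y}" "{{x}, {y}}"] x y by auto
  have g1: "group (subgroup_generated SL {x, y})" by (rule group.group_subgroup_generated[OF group_SL])
  have g2: "group (subgroup_generated PSL {{x}, {y}})" by (rule group.group_subgroup_generated[OF group_PSL])
  have gh2: "group_hom (subgroup_generated SL {x, y}) (subgroup_generated PSL {{x}, {y}}) ?f"
    using g1 g2 i by (simp add: group_hom_def group_hom_axioms_def iso_def)
  have bij: "bij_betw ?f (carrier (subgroup_generated SL {x, y})) (carrier (subgroup_generated PSL {{x}, {y}}))"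
    using i by (simp add: iso_def)
  show ?thesis
  proof
    assume "solvable (subgroup_generated PSL {{x}, {y}})"
    thus "solvable (subgroup_generated SL {x, y})"
      using group_hom.inj_hom_imp_solvable[OF gh2] bij by (simp add: bij_betw_def)
  next
    assume "solvable (subgroup_generated SL {x, y})"
    thus "solvable (subgroup_generated PSL {{x}, {y}})"
      using group_hom.surj_hom_imp_solvable[OF gh2] bij by (simp add: bij_betw_def)
  qed
qed

lemma Sol_PSL: "x \<in> Gs \<Longrightarrow> Sol PSL {x} = (\<lambda>a. {a}) ` Sx x"
proof -
  assume x: "x \<in> Gs"
  have "Sol PSL {x} = {y' \<in> carrier PSL. solvable (subgroup_generated PSL {{x}, y'})}"
    by (simp add: Sol_def)
  also have "\<dots> = (\<lambda>a. {a}) ` {y \<in> Gs. solvable (subgroup_generated SL {x, y})}"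
    using sol_transfer[OF x] by (auto simp: carrier_PSL)
  also have "{y \<in> Gs. solvable (subgroup_generated SL {x, y})} = Sol SL x"
    by (simp add: Sol_def)
  also have "\<dots> = Sx x" using Sol_SL[OF x] by (simp add: Sx_def)
  finally show ?thesis .
qed

lemma card_Solv_PSL: "card (Solv PSL) = 2 * CARD('a) * CARD('a)"
proof -
  have "Solv PSL = (\<lambda>A. (\<lambda>a. {a}) ` A) ` (Sx ` Gs)"
    unfolding Solv_def carrier_PSL using Sol_PSL by (auto simp: image_image)
  moreover have "inj_on (\<lambda>A. (\<lambda>a::'a^2^2. {a}) ` A) (Sx ` Gs)"
    by (rule inj_onI) (simp add: inj_image_eq_iff inj_def)
  ultimately show ?thesis using card_Sx by (simp add: card_image)
qed

end

theorem theorem3p7: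
  fixes p :: nat
  assumes "prime p"
    and "CARD('a::{field,finite}) = 2 ^ p"
  shows "card (Solv (PSL2 TYPE('a))) = 2 * (2 ^ p) ^ 2"
proof -
  have p2: "p \<ge> 2" using assms(1) by (rule prime_ge_2_nat)
  have two: "(2::'a) = 0"
  proof -
    have "CHAR('a) dvd 2 ^ p" using CHAR_dvd_CARD[where ?'a = 'a] assms(2) by simp
    then obtain i where i: "i \<le> p" "CHAR('a) = 2 ^ i"
      using divides_primepow_nat[OF two_is_prime_nat] by blast
    have "i \<noteq> 0" using i CHAR_not_1'[where ?'a = 'a] by auto
    have "(of_nat (2 ^ i) :: 'a) = 0" using i(2) of_nat_CHAR[where ?'a = 'a] by simp
    hence "(2::'a) ^ i = 0" by simp
    thus ?thesis by simp
  qed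
  have gam: "\<exists>g::'a. g \<noteq> 0 \<and> g \<noteq> 1"
  proof (rule ccontr)
    assume "\<not> (\<exists>g::'a. g \<noteq> 0 \<and> g \<noteq> 1)"
    hence "(UNIV :: 'a set) \<subseteq> {0, 1}" by auto
    hence "CARD('a) \<le> card {0::'a, 1}" by (rule card_mono[rotated]) simp
    also have "\<dots> \<le> 2" by (rule card_insert_le_m1) auto
    finally have "2 ^ p \<le> (2::nat)" using assms(2) by simp
    moreover have "(2::nat) ^ 2 \<le> 2 ^ p" using p2 by (rule power_increasing) simp
    ultimately show False by simp
  qed
  interpret C2 "TYPE('a)" by unfold_locales (use two gam in auto)
  have "card (Solv (PSL2 TYPE('a))) = 2 * CARD('a) * CARD('a)" by (rule card_Solv_PSL)
  thus ?thesis using assms(2) by (simp add: power2_eq_square)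
qed


end
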